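(* Let $p,q$ be odd primes with $q-p=2$, let $K=\mathbb{Q}(\sqrt{-7})$, and assume $p$ and $q$ are both inert in $K$. Let $E'=E'_+: y^2=x^3-2(p+q)x^2+4x$ and $\pi_2=-\frac{1+\sqrt{-7}}{2}$, $\overline{\pi_2}=\frac{-1+\sqrt{-7}}{2}$. Then: (1) if $d\in K(S,2)$ satisfies $\pi_2\mid d$ or $\overline{\pi_2}\mid d$, then $d\notin S^{(\widehat\varphi)}(E'/K)$; (2) $-p,-q\in S^{(\widehat\varphi)}(E'/K)$; (3) $-1\in S^{(\widehat\varphi)}(E'/K)$ iff $p\equiv 3,17,31\pmod{56}$.
   Context: Let $E=E_+: y^2=x(x+p)(x+q)$ and $\widehat\varphi:E'\to E$, $(x,y)\mapsto(y^2/(4x^2), y(4-x^2)/(8x^2))$, the dual of the 2-isogeny $\varphi:E\to E'$, $(x,y)\mapsto(y^2/x^2,y(pq-x^2)/x^2)$. Let $S=\{\infty\}\cup\{$primes of $K$ dividing $2pq\}$ and $K(S,2)=\{d\in K^*/K^{*2}:\ \mathrm{ord}_v(d)$ even for all $v\notin S\}=\langle -1,\pi_2,\overline{\pi_2},p,q\rangle$. The $\widehat\varphi$-Selmer group is identified with $S^{(\widehat\varphi)}(E'/K)=\{d\in K(S,2): C'_d(K_v)\neq\emptyset$ for all $v\in S\}$, where $C'_d: dw^2=d^2+(p+q)dz^2+pqz^4$. "$\pi\mid d$" means $\mathrm{ord}_\pi(d)$ is odd. *)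

theory Defs
  imports Complex_Main "HOL-Computational_Algebra.Primes"
begin

definition sqrtm7 :: complex where
  "sqrtm7 = \<i> * complex_of_real (sqrt 7)"

definition KK :: "complex set" where
  "KK = {complex_of_real (of_rat a) + complex_of_real (of_rat b) * sqrtm7 | a b. True}"

definition OK :: "complex set" where
  "OK = {of_int a + of_int b * ((1 + sqrtm7) / 2) | a b. True}"

definition pi2 :: complex where "pi2 = - (1 + sqrtm7) / 2"
definition pi2bar :: complex where "pi2bar = (-1 + sqrtm7) / 2"

definition OK_dvd :: "complex \<Rightarrow> complex \<Rightarrow> bool" where
  "OK_dvd a b \<longleftrightarrow> (\<exists>c\<in>OK. b = a * c)"

text \<open>A prime element of O_K; a rational prime p is inert in K iff p is a prime element of O_K.\<close>
definition OK_prime :: "complex \<Rightarrow> bool" where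
  "OK_prime x \<longleftrightarrow> x \<in> OK \<and> x \<noteq> 0 \<and> \<not> (\<exists>u\<in>OK. x * u = 1) \<and>
     (\<forall>a\<in>OK. \<forall>b\<in>OK. OK_dvd x (a * b) \<longrightarrow> OK_dvd x a \<or> OK_dvd x b)"

definition inert_in_K :: "nat \<Rightarrow> bool" where
  "inert_in_K p \<longleftrightarrow> OK_prime (of_nat p)"

definition kord :: "complex \<Rightarrow> complex \<Rightarrow> int" where
  "kord \<pi> x = (THE n. \<exists>a\<in>OK. \<exists>b\<in>OK. \<not> OK_dvd \<pi> a \<and> \<not> OK_dvd \<pi> b \<and>
                        x * b = \<pi> powi n * a)"

text \<open>"pi-adic valuation of x is at least N" (true for x = 0).\<close>
definition vge :: "complex \<Rightarrow> nat \<Rightarrow> complex \<Rightarrow> bool" where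
  "vge \<pi> N x \<longleftrightarrow> (\<exists>a\<in>OK. \<exists>b\<in>OK. \<not> OK_dvd \<pi> b \<and> x * b = \<pi> ^ N * a)"

definition adic_cauchy :: "complex \<Rightarrow> (nat \<Rightarrow> complex) \<Rightarrow> bool" where
  "adic_cauchy \<pi> w \<longleftrightarrow> (\<forall>N. \<exists>M. \<forall>m\<ge>M. \<forall>n\<ge>M. vge \<pi> N (w m - w n))"

definition adic_null :: "complex \<Rightarrow> (nat \<Rightarrow> complex) \<Rightarrow> bool" where
  "adic_null \<pi> f \<longleftrightarrow> (\<forall>N. \<exists>M. \<forall>n\<ge>M. vge \<pi> N (f n))"

definition Cd :: "nat \<Rightarrow> nat \<Rightarrow> complex \<Rightarrow> complex \<Rightarrow> complex \<Rightarrow> complex" where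
  "Cd p q d w z = d * w^2 - (d^2 + (of_nat p + of_nat q) * d * z^2 + of_nat p * of_nat q * z^4)"

text \<open>C'_d(K_v) nonempty for the finite place v = (pi): a point of C'_d over the completion K_v,
  i.e. pi-adically Cauchy sequences in K (elements of K_v) on which F tends to 0.\<close>
definition loc_solv :: "complex \<Rightarrow> nat \<Rightarrow> nat \<Rightarrow> complex \<Rightarrow> bool" where
  "loc_solv \<pi> p q d \<longleftrightarrow> (\<exists>w z. (\<forall>n. w n \<in> KK \<and> z n \<in> KK) \<and>
      adic_cauchy \<pi> w \<and> adic_cauchy \<pi> z \<and> adic_null \<pi> (\<lambda>n. Cd p q d (w n) (z n)))"

text \<open>Infinite place: K_infinity = C.\<close>
definition arch_solv :: "nat \<Rightarrow> nat \<Rightarrow> complex \<Rightarrow> bool" where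
  "arch_solv p q d \<longleftrightarrow> (\<exists>w z :: complex. Cd p q d w z = 0)"

text \<open>K(S,2) = <-1, pi2, pi2bar, p, q> (representatives).\<close>
definition KS2 :: "nat \<Rightarrow> nat \<Rightarrow> complex set" where
  "KS2 p q = {(-1) ^ a * pi2 ^ b * pi2bar ^ c * of_nat p ^ e * of_nat q ^ f | a b c e f. True}"

text \<open>S = {infinity, pi2, pi2bar, p, q} when p, q are inert.\<close>
definition Selmer :: "nat \<Rightarrow> nat \<Rightarrow> complex set" where
  "Selmer p q = {d \<in> KS2 p q. arch_solv p q d \<and> loc_solv pi2 p q d \<and> loc_solv pi2bar p q d
                   \<and> loc_solv (of_nat p) p q d \<and> loc_solv (of_nat q) p q d}"

end

theory Submission
  imports Defs "HOL-Number_Theory.Number_Theory"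
begin

definition om :: complex where "om = (1 + sqrtm7) / 2"

lemma sqrtm7_sq: "sqrtm7 ^ 2 = -7"
proof -
  have "(complex_of_real (sqrt 7))^2 = 7"
    by (metis of_real_numeral of_real_power real_sqrt_pow2 zero_le_numeral)
  then show ?thesis by (simp add: sqrtm7_def power_mult_distrib)
qed

lemma sqrtm7_mult_self: "sqrtm7 * sqrtm7 = -7"
  using sqrtm7_sq by (simp add: power2_eq_square)

lemma om_sq: "om * om = om - 2"
  unfolding om_def by (simp add: field_simps sqrtm7_mult_self)

lemma Re_sqrtm7[simp]: "Re sqrtm7 = 0" and Im_sqrtm7[simp]: "Im sqrtm7 = sqrt 7"
  by (simp_all add: sqrtm7_def)

lemma Re_om[simp]: "Re om = 1/2" and Im_om[simp]: "Im om = sqrt 7 / 2"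
  by (simp_all add: om_def)

lemma OK_iff: "x \<in> OK \<longleftrightarrow> (\<exists>a b::int. x = of_int a + of_int b * om)"
  unfolding OK_def om_def by auto

lemma OK_intI[simp]: "of_int a \<in> OK"
  unfolding OK_iff by (rule exI[of _ a], rule exI[of _ 0]) simp

lemma OK_natI[simp]: "of_nat a \<in> OK"
  using OK_intI[of "int a"] by simp

lemma OK_0[simp]: "0 \<in> OK" and OK_1[simp]: "1 \<in> OK"
  using OK_intI[of 0] OK_intI[of 1] by simp_all

lemma OK_numeral[simp]: "numeral n \<in> OK"
  using OK_intI[of "numeral n"] by simp

lemma OK_om[simp]: "om \<in> OK"
  unfolding OK_iff by (rule exI[of _ 0], rule exI[of _ 1]) simp

lemma OK_add[simp]: "x \<in> OK \<Longrightarrow> y \<in> OK \<Longrightarrow> x + y \<in> OK"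
  unfolding OK_iff
proof (elim exE)
  fix a b c d :: int assume "x = of_int a + of_int b * om" "y = of_int c + of_int d * om"
  then show "\<exists>a b::int. x + y = of_int a + of_int b * om"
    by (intro exI[of _ "a+c"] exI[of _ "b+d"]) (simp add: algebra_simps)
qed

lemma OK_uminus[simp]: "x \<in> OK \<Longrightarrow> - x \<in> OK"
  unfolding OK_iff
proof (elim exE)
  fix a b :: int assume "x = of_int a + of_int b * om"
  then show "\<exists>a b::int. - x = of_int a + of_int b * om"
    by (intro exI[of _ "-a"] exI[of _ "-b"]) (simp add: algebra_simps)
qed

lemma OK_diff[simp]: "x \<in> OK \<Longrightarrow> y \<in> OK \<Longrightarrow> x - y \<in> OK"
  using OK_add[of x "-y"] by simp

lemma OK_mult[simp]: "x \<in> OK \<Longrightarrow> y \<in> OK \<Longrightarrow> x * y \<in> OK"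
  unfolding OK_iff
proof (elim exE)
  fix a b c d :: int assume xy: "x = of_int a + of_int b * om" "y = of_int c + of_int d * om"
  have "x * y = of_int a * of_int c + (of_int a * of_int d + of_int b * of_int c) * om + of_int b * of_int d * (om * om)"
    unfolding xy by (simp add: algebra_simps)
  also have "\<dots> = of_int (a*c - 2*b*d) + of_int (a*d + b*c + b*d) * om"
    unfolding om_sq by (simp add: algebra_simps)
  finally show "\<exists>a b::int. x * y = of_int a + of_int b * om" by blast
qed

lemma OK_power[simp]: "x \<in> OK \<Longrightarrow> x ^ n \<in> OK"
  by (induction n) auto

lemma sqrtm7_om: "sqrtm7 = 2 * om - 1"
  unfolding om_def by (simp add: field_simps)

lemma OK_sqrtm7[simp]: "sqrtm7 \<in> OK"
  unfolding sqrtm7_om by simp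

lemma pi2_om: "pi2 = - om" unfolding pi2_def om_def by (simp add: field_simps)
lemma pi2bar_om: "pi2bar = om - 1" unfolding pi2bar_def om_def by (simp add: field_simps)

lemma OK_pi2[simp]: "pi2 \<in> OK" and OK_pi2bar[simp]: "pi2bar \<in> OK"
  unfolding pi2_om pi2bar_om by simp_all

lemma pi2_pi2bar: "pi2 * pi2bar = 2"
  unfolding pi2_om pi2bar_om using om_sq by (simp add: algebra_simps)

lemma pi2_sum: "pi2 + pi2bar = -1"
  unfolding pi2_om pi2bar_om by simp

lemma cnj_OK: "x \<in> OK \<Longrightarrow> cnj x \<in> OK"
  unfolding OK_iff
proof (elim exE)
  fix a b :: int assume "x = of_int a + of_int b * om"
  moreover have c: "cnj om = 1 - om" by (simp add: complex_eq_iff)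
  ultimately have "cnj x = of_int a + of_int b * (1 - om)"
    by simp
  then have "cnj x = of_int (a+b) + of_int (-b) * om"
    by (simp add: algebra_simps)
  then show "\<exists>a b::int. cnj x = of_int a + of_int b * om" by blast
qed

lemma OK_norm_int: "x \<in> OK \<Longrightarrow> \<exists>n::int. (cmod x)^2 = of_int n"
  unfolding OK_iff
proof (elim exE)
  fix a b :: int assume x: "x = of_int a + of_int b * om"
  have "(cmod x)^2 = (Re x)^2 + (Im x)^2" by (simp add: cmod_power2)
  also have "\<dots> = (a + b/2)^2 + (b * sqrt 7 / 2)^2" unfolding x by simp
  also have "\<dots> = of_int (a^2 + a*b + 2*b^2)"
    by (simp add: power2_eq_square field_simps)
  finally show ?thesis by blast
qed

lemma OK_norm_ge1: "x \<in> OK \<Longrightarrow> x \<noteq> 0 \<Longrightarrow> (cmod x)^2 \<ge> 1"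
proof -
  assume "x \<in> OK" "x \<noteq> 0"
  then obtain n::int where n: "(cmod x)^2 = of_int n" using OK_norm_int by blast
  have "(cmod x)^2 > 0" using \<open>x \<noteq> 0\<close> by simp
  then have "n > 0" using n by simp
  then show ?thesis using n by simp
qed

lemma KK_iff: "x \<in> KK \<longleftrightarrow> (\<exists>a b::rat. x = of_real (of_rat a) + of_real (of_rat b) * sqrtm7)"
  unfolding KK_def by auto

lemma KK_add[simp]: "x \<in> KK \<Longrightarrow> y \<in> KK \<Longrightarrow> x + y \<in> KK"
  unfolding KK_iff
proof (elim exE)
  fix a b c d :: rat assume "x = of_real (of_rat a) + of_real (of_rat b) * sqrtm7"
    "y = of_real (of_rat c) + of_real (of_rat d) * sqrtm7"
  then have "x + y = of_real (of_rat (a+c)) + of_real (of_rat (b+d)) * sqrtm7"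
    by (simp add: of_rat_add algebra_simps)
  then show "\<exists>a b::rat. x + y = of_real (of_rat a) + of_real (of_rat b) * sqrtm7" by blast
qed

lemma KK_uminus[simp]: "x \<in> KK \<Longrightarrow> - x \<in> KK"
  unfolding KK_iff
proof (elim exE)
  fix a b :: rat assume "x = of_real (of_rat a) + of_real (of_rat b) * sqrtm7"
  then have "- x = of_real (of_rat (-a)) + of_real (of_rat (-b)) * sqrtm7"
    by (simp add: of_rat_minus algebra_simps)
  then show "\<exists>a b::rat. - x = of_real (of_rat a) + of_real (of_rat b) * sqrtm7" by blast
qed

lemma KK_diff[simp]: "x \<in> KK \<Longrightarrow> y \<in> KK \<Longrightarrow> x - y \<in> KK"
  using KK_add[of x "-y"] by simp

lemma KK_mult[simp]: "x \<in> KK \<Longrightarrow> y \<in> KK \<Longrightarrow> x * y \<in> KK"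
  unfolding KK_iff
proof (elim exE)
  fix a b c d :: rat assume xy: "x = of_real (of_rat a) + of_real (of_rat b) * sqrtm7"
    "y = of_real (of_rat c) + of_real (of_rat d) * sqrtm7"
  have "x * y = of_real (of_rat a) * of_real (of_rat c) + (of_real (of_rat a) * of_real (of_rat d)
      + of_real (of_rat b) * of_real (of_rat c)) * sqrtm7 + of_real (of_rat b) * of_real (of_rat d) * (sqrtm7 * sqrtm7)"
    unfolding xy by (simp add: algebra_simps)
  also have "\<dots> = of_real (of_rat (a*c - 7*b*d)) + of_real (of_rat (a*d+b*c)) * sqrtm7"
    unfolding sqrtm7_mult_self by (simp add: of_rat_add of_rat_mult of_rat_diff algebra_simps)
  finally show "\<exists>a b::rat. x * y = of_real (of_rat a) + of_real (of_rat b) * sqrtm7" by blast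
qed

lemma KK_ratI[simp]: "of_real (of_rat a) \<in> KK"
  unfolding KK_iff by (rule exI[of _ a], rule exI[of _ 0]) simp

lemma KK_sqrtm7[simp]: "sqrtm7 \<in> KK"
  unfolding KK_iff by (rule exI[of _ 0], rule exI[of _ 1]) simp

lemma KK_inverse[simp]: "x \<in> KK \<Longrightarrow> inverse x \<in> KK"
proof -
  assume "x \<in> KK"
  then obtain a b :: rat where x: "x = of_real (of_rat a) + of_real (of_rat b) * sqrtm7"
    unfolding KK_iff by blast
  show ?thesis
  proof (cases "x = 0")
    case True then show ?thesis using KK_ratI[of 0] by simp
  next
    case False
    define n where "n = a*a + 7*b*b"
    have "(of_real (of_rat a) + of_real (of_rat b) * sqrtm7) * (of_real (of_rat a) - of_real (of_rat b) * sqrtm7)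
       = of_real (of_rat a) * of_real (of_rat a) - of_real (of_rat b) * of_real (of_rat b) * (sqrtm7 * sqrtm7)"
      by (simp add: algebra_simps)
    also have "\<dots> = of_real (of_rat n)"
      unfolding sqrtm7_mult_self n_def by (simp add: of_rat_add of_rat_mult algebra_simps)
    finally have e: "x * (of_real (of_rat a) - of_real (of_rat b) * sqrtm7) = of_real (of_rat n)"
      using x by simp
    have "n \<noteq> 0"
    proof
      assume "n = 0"
      moreover have "a*a \<ge> 0" "b*b \<ge> 0" by simp_all
      ultimately have "a*a = 0 \<and> b*b = 0" unfolding n_def by linarith
      then have "a = 0 \<and> b = 0" by simp
      then show False using False x by simp
    qed
    then have N: "(of_real (of_rat n) :: complex) \<noteq> 0" by simp
    have "inverse x = (of_real (of_rat a) - of_real (of_rat b) * sqrtm7) / of_real (of_rat n)"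
      using e False N by (simp add: field_simps)
    also have "\<dots> = (of_real (of_rat a) - of_real (of_rat b) * sqrtm7) * of_real (of_rat (inverse n))"
      by (simp add: of_rat_inverse of_real_inverse divide_inverse)
    finally have "inverse x = (of_real (of_rat a) - of_real (of_rat b) * sqrtm7) * of_real (of_rat (inverse n))" .
    also have "\<dots> \<in> KK"
      by (intro KK_mult KK_diff KK_ratI) (simp)
    finally show ?thesis .
  qed
qed

lemma KK_divide[simp]: "x \<in> KK \<Longrightarrow> y \<in> KK \<Longrightarrow> x / y \<in> KK"
  by (simp add: divide_inverse)

lemma KK_power[simp]: "x \<in> KK \<Longrightarrow> x ^ n \<in> KK"
  by (induction n) (auto simp: KK_ratI[of 1, simplified])

lemma KK_intI[simp]: "of_int a \<in> KK"
  using KK_ratI[of "of_int a"] by simp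

lemma KK_natI[simp]: "of_nat a \<in> KK"
  using KK_intI[of "int a"] by simp

lemma KK_0[simp]: "0 \<in> KK" and KK_1[simp]: "1 \<in> KK"
  using KK_intI[of 0] KK_intI[of 1] by simp_all

lemma KK_numeral[simp]: "numeral n \<in> KK"
  using KK_intI[of "numeral n"] by simp

lemma OK_KK: "x \<in> OK \<Longrightarrow> x \<in> KK"
  unfolding OK_iff
proof (elim exE)
  fix a b :: int assume "x = of_int a + of_int b * om"
  then have "x = of_int a + of_int b * (1 + sqrtm7) / 2" by (simp add: om_def)
  moreover have "of_int a + of_int b * (1 + sqrtm7) / 2 \<in> KK"
    by (intro KK_add KK_divide KK_mult) auto
  ultimately show "x \<in> KK" by simp
qed

lemma KK_powi[simp]: "x \<in> KK \<Longrightarrow> x powi n \<in> KK"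
  by (simp add: power_int_def)

lemma KK_frac: "x \<in> KK \<Longrightarrow> \<exists>A\<in>OK. \<exists>m::int. m > 0 \<and> x = A / of_int m"
proof -
  assume "x \<in> KK"
  then obtain a b :: rat where x: "x = of_real (of_rat a) + of_real (of_rat b) * sqrtm7"
    unfolding KK_iff by blast
  obtain n1 d1 where a: "a = Fract n1 d1" "d1 > 0" by (cases a) auto
  obtain n2 d2 where b: "b = Fract n2 d2" "d2 > 0" by (cases b) auto
  have ar: "of_real (of_rat a) = (of_int n1 / of_int d1 :: complex)"
    using a by (simp add: of_rat_rat)
  have br: "of_real (of_rat b) = (of_int n2 / of_int d2 :: complex)"
    using b by (simp add: of_rat_rat)
  define A where "A = of_int (n1*d2) + of_int (n2*d1) * sqrtm7"
  have "A \<in> OK" unfolding A_def by simp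
  moreover have "x = A / of_int (d1*d2)"
    unfolding x ar br A_def using a(2) b(2) by (simp add: field_simps)
  moreover have "d1*d2 > 0" using a b by simp
  ultimately show ?thesis by blast
qed

locale kp =
  fixes P :: complex
  assumes prime: "OK_prime P"
begin

abbreviation dv where "dv x \<equiv> OK_dvd P x"

lemma P_OK[simp]: "P \<in> OK" and P_nz[simp]: "P \<noteq> 0" and P_nunit: "\<not> (\<exists>u\<in>OK. P * u = 1)"
  using prime unfolding OK_prime_def by auto

lemma P_KK[simp]: "P \<in> KK" using OK_KK by simp

lemma P_prime: "a \<in> OK \<Longrightarrow> b \<in> OK \<Longrightarrow> dv (a * b) \<Longrightarrow> dv a \<or> dv b"
  using prime unfolding OK_prime_def by auto

lemma nd_1[simp]: "\<not> dv 1"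
  using P_nunit unfolding OK_dvd_def by (metis)

lemma dv_0[simp]: "dv 0" unfolding OK_dvd_def by (rule bexI[of _ 0]) auto

lemma dv_PI: "c \<in> OK \<Longrightarrow> dv (P * c)" unfolding OK_dvd_def by blast

lemma dv_mult: "c \<in> OK \<Longrightarrow> dv a \<Longrightarrow> dv (a * c)"
  unfolding OK_dvd_def by (metis OK_mult mult.assoc)

lemma dv_add: "dv a \<Longrightarrow> dv b \<Longrightarrow> dv (a + b)"
  unfolding OK_dvd_def by (metis OK_add distrib_left)

lemma dv_uminus: "dv a \<Longrightarrow> dv (- a)"
  unfolding OK_dvd_def by (metis OK_uminus mult_minus_right)

lemma dv_diff: "dv a \<Longrightarrow> dv b \<Longrightarrow> dv (a - b)"
  using dv_add[of a "-b"] dv_uminus[of b] by simp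

lemma dv_OK: "dv a \<Longrightarrow> a \<in> OK \<or> True" by simp

lemma nd_mult: "a \<in> OK \<Longrightarrow> b \<in> OK \<Longrightarrow> \<not> dv a \<Longrightarrow> \<not> dv b \<Longrightarrow> \<not> dv (a * b)"
  using P_prime by blast

lemma nd_nz: "\<not> dv a \<Longrightarrow> a \<noteq> 0" using dv_0 by auto

lemma norm_P: "(cmod P)^2 \<ge> 2"
proof -
  obtain n::int where n: "(cmod P)^2 = of_int n" using OK_norm_int[OF P_OK] by blast
  have "(cmod P)^2 \<ge> 1" using OK_norm_ge1[OF P_OK P_nz] .
  then have "n \<ge> 1" using n by simp
  moreover have "n \<noteq> 1"
  proof
    assume "n = 1"
    then have "of_real ((cmod P)^2) = (1::complex)" using n by simp
    then have "P * cnj P = 1" by (simp only: complex_norm_square)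
    then show False using P_nunit cnj_OK[OF P_OK] by blast
  qed
  ultimately have "n \<ge> 2" by simp
  then show ?thesis using n by simp
qed

lemma decomp_aux: "\<forall>x. x \<in> OK \<longrightarrow> x \<noteq> 0 \<longrightarrow> (cmod x)^2 < 2^k \<longrightarrow> (\<exists>n c. c \<in> OK \<and> \<not> dv c \<and> x = P^n * c)"
proof (induction k)
  case 0
  then show ?case using OK_norm_ge1 by fastforce
next
  case (Suc k)
  show ?case
  proof (intro allI impI)
    fix x assume x: "x \<in> OK" "x \<noteq> 0" "(cmod x)^2 < 2^Suc k"
    show "\<exists>n c. c \<in> OK \<and> \<not> dv c \<and> x = P^n * c"
    proof (cases "dv x")
      case False
      then show ?thesis using x by (intro exI[of _ 0] exI[of _ x]) simp
    next
      case True
      then obtain c where c: "c \<in> OK" "x = P * c" unfolding OK_dvd_def by blast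
      have "c \<noteq> 0" using c x by auto
      have "(cmod x)^2 = (cmod P)^2 * (cmod c)^2" using c by (simp add: norm_mult power_mult_distrib)
      moreover have "(cmod c)^2 \<ge> 0" by simp
      ultimately have "2 * (cmod c)^2 \<le> (cmod x)^2" using norm_P
        by (metis mult_right_mono)
      then have "(cmod c)^2 < 2^k" using x(3) by simp
      then obtain n c' where "c' \<in> OK" "\<not> dv c'" "c = P^n * c'"
        using Suc.IH c(1) \<open>c \<noteq> 0\<close> by blast
      then show ?thesis using c by (intro exI[of _ "Suc n"] exI[of _ c']) simp
    qed
  qed
qed

lemma decomp: "x \<in> OK \<Longrightarrow> x \<noteq> 0 \<Longrightarrow> \<exists>n c. c \<in> OK \<and> \<not> dv c \<and> x = P^n * c"
proof -
  assume "x \<in> OK" "x \<noteq> 0"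
  obtain k where "(cmod x)^2 < 2^k" using real_arch_pow[of 2 "(cmod x)^2"] by auto
  then show ?thesis using decomp_aux \<open>x \<in> OK\<close> \<open>x \<noteq> 0\<close> by blast
qed

lemma exp_lt_contra:
  assumes "a \<in> OK" "b \<in> OK" "a' \<in> OK" "b' \<in> OK" "\<not> dv a" "\<not> dv b" "\<not> dv a'" "\<not> dv b'"
    and eq: "P powi n * a * b' = P powi m * a' * b" and lt: "n < m"
  shows False
proof -
  have "P powi m = P powi n * P ^ nat (m - n)"
    using lt by (simp add: power_int_add[symmetric] flip: power_int_of_nat)
  then have "P powi n * (a * b') = P powi n * (P * (P ^ (nat (m - n) - 1) * a' * b))"
    using eq lt by (simp add: algebra_simps power_Suc[symmetric] Suc_nat_eq_nat_zadd1)
  then have "a * b' = P * (P ^ (nat (m - n) - 1) * a' * b)" by simp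
  then have "dv (a * b')" using dv_PI assms by simp
  then show False using nd_mult assms by blast
qed

lemma exp_unique:
  assumes "a \<in> OK" "b \<in> OK" "a' \<in> OK" "b' \<in> OK" "\<not> dv a" "\<not> dv b" "\<not> dv a'" "\<not> dv b'"
    and eq: "P powi n * a * b' = P powi m * a' * b"
  shows "n = m"
  using exp_lt_contra[OF assms] exp_lt_contra[OF assms(3,4,1,2,7,8,5,6) eq[symmetric]]
  by (meson linorder_neqE)

lemma kord_ex: "x \<in> KK \<Longrightarrow> x \<noteq> 0 \<Longrightarrow> \<exists>n. \<exists>a\<in>OK. \<exists>b\<in>OK. \<not> dv a \<and> \<not> dv b \<and> x * b = P powi n * a"
proof -
  assume x: "x \<in> KK" "x \<noteq> 0"
  obtain A m where A: "A \<in> OK" "m > 0" "x = A / of_int m" using KK_frac[OF x(1)] by blast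
  have "A \<noteq> 0" using A x by auto
  obtain i a where a: "a \<in> OK" "\<not> dv a" "A = P^i * a" using decomp[OF A(1) \<open>A \<noteq> 0\<close>] by blast
  obtain j b where b: "b \<in> OK" "\<not> dv b" "of_int m = P^j * b"
    using decomp[of "of_int m"] A(2) by auto
  have "x * b = P powi (int i - int j) * a"
    using A(3) a(3) b(3) nd_nz[OF b(2)]
    by (simp add: power_int_diff field_simps)
  then show ?thesis using a b by blast
qed

lemma kord_eq:
  assumes "a \<in> OK" "b \<in> OK" "\<not> dv a" "\<not> dv b" "x * b = P powi n * a"
  shows "kord P x = n"
  unfolding kord_def
proof (rule the_equality)
  show "\<exists>a\<in>OK. \<exists>b\<in>OK. \<not> dv a \<and> \<not> dv b \<and> x * b = P powi n * a" using assms by blast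
next
  fix m assume "\<exists>a\<in>OK. \<exists>b\<in>OK. \<not> dv a \<and> \<not> dv b \<and> x * b = P powi m * a"
  then obtain a' b' where h: "a' \<in> OK" "b' \<in> OK" "\<not> dv a'" "\<not> dv b'" "x * b' = P powi m * a'" by blast
  have "P powi m * a' * b = P powi n * a * b'"
    using h(5) assms(5) by (metis mult.commute mult.left_commute)
  then show "m = n" using exp_unique[of a' b' a b] h assms by blast
qed

lemma kord_spec: "x \<in> KK \<Longrightarrow> x \<noteq> 0 \<Longrightarrow> \<exists>a\<in>OK. \<exists>b\<in>OK. \<not> dv a \<and> \<not> dv b \<and> x * b = P powi (kord P x) * a"
  using kord_ex kord_eq by metis

definition vgi :: "int \<Rightarrow> complex \<Rightarrow> bool" where
  "vgi k x \<longleftrightarrow> (\<exists>a\<in>OK. \<exists>b\<in>OK. \<not> dv b \<and> x * b = P powi k * a)"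

lemma vge_vgi: "vge P N x = vgi (int N) x"
  unfolding vge_def vgi_def by simp

lemma vgi_0[simp]: "vgi k 0"
  unfolding vgi_def by (rule bexI[of _ 0], rule bexI[of _ 1]) auto

lemma vgi_add: "vgi k x \<Longrightarrow> vgi k y \<Longrightarrow> vgi k (x + y)"
  unfolding vgi_def
proof (elim bexE conjE)
  fix a b a' b' assume h: "a \<in> OK" "b \<in> OK" "a' \<in> OK" "b' \<in> OK" "\<not> dv b" "\<not> dv b'"
    "x * b = P powi k * a" "y * b' = P powi k * a'"
  have "(x + y) * (b * b') = P powi k * (a * b' + a' * b)"
    using h(7,8) by (simp add: algebra_simps)
  moreover have "\<not> dv (b * b')" using nd_mult h by blast
  ultimately show "\<exists>a\<in>OK. \<exists>b\<in>OK. \<not> dv b \<and> (x + y) * b = P powi k * a"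
    using h by (intro bexI[of _ "a * b' + a' * b"] bexI[of _ "b * b'"]) auto
qed

lemma vgi_uminus: "vgi k x \<Longrightarrow> vgi k (- x)"
  unfolding vgi_def
proof (elim bexE conjE)
  fix a b assume h: "a \<in> OK" "b \<in> OK" "\<not> dv b" "x * b = P powi k * a"
  then show "\<exists>a\<in>OK. \<exists>b\<in>OK. \<not> dv b \<and> - x * b = P powi k * a"
    by (intro bexI[of _ "- a"] bexI[of _ b]) auto
qed

lemma vgi_diff: "vgi k x \<Longrightarrow> vgi k y \<Longrightarrow> vgi k (x - y)"
  using vgi_add[of k x "-y"] vgi_uminus[of k y] by simp

lemma vgi_mult: "vgi k x \<Longrightarrow> vgi l y \<Longrightarrow> vgi (k + l) (x * y)"
  unfolding vgi_def
proof (elim bexE conjE)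
  fix a b a' b' assume h: "a \<in> OK" "b \<in> OK" "a' \<in> OK" "b' \<in> OK" "\<not> dv b" "\<not> dv b'"
    "x * b = P powi k * a" "y * b' = P powi l * a'"
  have "(x * y) * (b * b') = P powi (k + l) * (a * a')"
    using h(7,8) by (simp add: power_int_add algebra_simps) (metis mult.assoc mult.commute)
  moreover have "\<not> dv (b * b')" using nd_mult h by blast
  ultimately show "\<exists>a\<in>OK. \<exists>b\<in>OK. \<not> dv b \<and> (x * y) * b = P powi (k + l) * a"
    using h by (intro bexI[of _ "a * a'"] bexI[of _ "b * b'"]) auto
qed

lemma vgi_mono: "vgi k x \<Longrightarrow> l \<le> k \<Longrightarrow> vgi l x"
  unfolding vgi_def
proof (elim bexE conjE)
  fix a b assume h: "a \<in> OK" "b \<in> OK" "\<not> dv b" "x * b = P powi k * a" and lk: "l \<le> k"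
  have "P powi k = P powi l * P ^ nat (k - l)"
    using lk by (simp add: power_int_add[symmetric] flip: power_int_of_nat)
  then have "x * b = P powi l * (P ^ nat (k - l) * a)" using h by simp
  then show "\<exists>a\<in>OK. \<exists>b\<in>OK. \<not> dv b \<and> x * b = P powi l * a"
    using h by (intro bexI[of _ "P ^ nat (k - l) * a"] bexI[of _ b]) auto
qed

lemma vgi_OK: "x \<in> OK \<Longrightarrow> vgi 0 x"
  unfolding vgi_def by (intro bexI[of _ x] bexI[of _ 1]) auto

lemma vgi_Ppow: "vgi k (P powi k)"
  unfolding vgi_def by (intro bexI[of _ 1] bexI[of _ 1]) auto

lemma vgi_iff:
  assumes x: "x \<in> KK"
  shows "vgi k x \<longleftrightarrow> (x = 0 \<or> k \<le> kord P x)"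
proof (cases "x = 0")
  case True then show ?thesis by simp
next
  case nz: False
  obtain a b where ab: "a \<in> OK" "b \<in> OK" "\<not> dv a" "\<not> dv b" "x * b = P powi (kord P x) * a"
    using kord_spec[OF x nz] by blast
  show ?thesis
  proof
    assume "vgi k x"
    then obtain a' b' where h: "a' \<in> OK" "b' \<in> OK" "\<not> dv b'" "x * b' = P powi k * a'"
      unfolding vgi_def by blast
    have "a' \<noteq> 0" using h nz nd_nz[OF h(3)] by auto
    then obtain j c where c: "c \<in> OK" "\<not> dv c" "a' = P^j * c" using decomp h(1) by blast
    have "x * b' = P powi (k + int j) * c" using h(4) c(3) by (simp add: power_int_add)
    then have "kord P x = k + int j" using kord_eq[OF c(1) h(2) c(2) h(3)] by simp
    then show "x = 0 \<or> k \<le> kord P x" by simp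
  next
    assume "x = 0 \<or> k \<le> kord P x"
    then have "k \<le> kord P x" using nz by simp
    then show "vgi k x" using vgi_mono[of "kord P x" x k] ab unfolding vgi_def by blast
  qed
qed

lemma kord_mult: "x \<in> KK \<Longrightarrow> y \<in> KK \<Longrightarrow> x \<noteq> 0 \<Longrightarrow> y \<noteq> 0 \<Longrightarrow> kord P (x * y) = kord P x + kord P y"
proof -
  assume h: "x \<in> KK" "y \<in> KK" "x \<noteq> 0" "y \<noteq> 0"
  obtain a b where ab: "a \<in> OK" "b \<in> OK" "\<not> dv a" "\<not> dv b" "x * b = P powi (kord P x) * a"
    using kord_spec h by blast
  obtain a' b' where ab': "a' \<in> OK" "b' \<in> OK" "\<not> dv a'" "\<not> dv b'" "y * b' = P powi (kord P y) * a'"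
    using kord_spec h by blast
  have "(x * y) * (b * b') = P powi (kord P x + kord P y) * (a * a')"
    using ab(5) ab'(5) by (simp add: power_int_add algebra_simps) (metis mult.assoc mult.commute)
  then show ?thesis using kord_eq[of "a * a'" "b * b'"] nd_mult ab ab' by simp
qed

lemma kord_unit: "u \<in> OK \<Longrightarrow> \<not> dv u \<Longrightarrow> kord P u = 0"
  using kord_eq[of u 1 u 0] by simp

lemma kord_1[simp]: "kord P 1 = 0" using kord_unit by simp

lemma kord_P[simp]: "kord P P = 1"
  using kord_eq[of 1 1 P 1] by simp

lemma kord_inverse: "x \<in> KK \<Longrightarrow> x \<noteq> 0 \<Longrightarrow> kord P (inverse x) = - kord P x"
  using kord_mult[of x "inverse x"] by simp

lemma kord_divide: "x \<in> KK \<Longrightarrow> y \<in> KK \<Longrightarrow> x \<noteq> 0 \<Longrightarrow> y \<noteq> 0 \<Longrightarrow> kord P (x / y) = kord P x - kord P y"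
  using kord_mult[of x "inverse y"] kord_inverse[of y] by (simp add: divide_inverse)

lemma kord_power: "x \<in> KK \<Longrightarrow> x \<noteq> 0 \<Longrightarrow> kord P (x ^ n) = int n * kord P x"
  by (induction n) (simp_all add: kord_mult algebra_simps)

lemma kord_uminus: "x \<in> KK \<Longrightarrow> x \<noteq> 0 \<Longrightarrow> kord P (- x) = kord P x"
proof -
  assume "x \<in> KK" "x \<noteq> 0"
  have "kord P (-1) = 0" using kord_unit[of "-1"] dv_uminus[of "-1"] by auto
  then show ?thesis using kord_mult[of "-1" x] \<open>x \<in> KK\<close> \<open>x \<noteq> 0\<close> by simp
qed

lemma kord_OK: "x \<in> OK \<Longrightarrow> x \<noteq> 0 \<Longrightarrow> kord P x \<ge> 0"
  using vgi_iff[of x 0] vgi_OK OK_KK by auto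

lemma kord_strict:
  assumes "x \<in> KK" "y \<in> KK" "x \<noteq> 0" "y = 0 \<or> kord P x < kord P y"
  shows "x + y \<noteq> 0 \<and> kord P (x + y) = kord P x"
proof (cases "y = 0")
  case True then show ?thesis using assms by simp
next
  case False
  then have lt: "kord P x < kord P y" using assms by simp
  have ne: "x + y \<noteq> 0"
  proof
    assume "x + y = 0" then have "y = - x" by (metis add_eq_0_iff)
    then show False using lt kord_uminus assms by simp
  qed
  have "vgi (kord P x) x" "vgi (kord P x) y" using vgi_iff assms lt by auto
  then have "vgi (kord P x) (x + y)" by (rule vgi_add)
  then have ge: "kord P x \<le> kord P (x + y)" using vgi_iff[of "x+y"] assms ne by simp
  have "\<not> kord P x < kord P (x + y)"
  proof
    assume l2: "kord P x < kord P (x + y)"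
    have "vgi (kord P x + 1) (x + y)" "vgi (kord P x + 1) (- y)"
      using vgi_iff[of "x+y"] vgi_iff[of "-y"] assms l2 lt ne kord_uminus[of y] False by auto
    then have "vgi (kord P x + 1) (x + y + - y)" by (rule vgi_add)
    then show False using vgi_iff[of x] assms by simp
  qed
  then show ?thesis using ge ne by simp
qed

lemma vgi_divide: "x \<in> KK \<Longrightarrow> u \<in> KK \<Longrightarrow> u \<noteq> 0 \<Longrightarrow> vgi k x \<Longrightarrow> vgi (k - kord P u) (x / u)"
  using vgi_iff[of x k] vgi_iff[of "x/u" "k - kord P u"] kord_divide[of x u] by auto

end

context kp
begin

lemma cauchy_iff: "adic_cauchy P w \<longleftrightarrow> (\<forall>N. \<exists>M. \<forall>m\<ge>M. \<forall>n\<ge>M. vgi (int N) (w m - w n))"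
  unfolding adic_cauchy_def vge_vgi ..

lemma null_iff: "adic_null P f \<longleftrightarrow> (\<forall>N. \<exists>M. \<forall>n\<ge>M. vgi (int N) (f n))"
  unfolding adic_null_def vge_vgi ..

lemma cauchy_const: "adic_cauchy P (\<lambda>n. c)"
  unfolding cauchy_iff by simp

lemma null_zero: "adic_null P (\<lambda>n. 0)"
  unfolding null_iff by simp

lemma vgi_self: "x \<in> KK \<Longrightarrow> vgi (kord P x) x"
  using vgi_iff by simp

lemma vgi_cmult: "c \<in> KK \<Longrightarrow> x \<in> KK \<Longrightarrow> vgi (int N + int (nat \<bar>kord P c\<bar>)) x \<Longrightarrow> vgi (int N) (c * x)"
proof -
  assume h: "c \<in> KK" "x \<in> KK" "vgi (int N + int (nat \<bar>kord P c\<bar>)) x"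
  have "vgi (kord P c + (int N + int (nat \<bar>kord P c\<bar>))) (c * x)"
    using vgi_mult[OF vgi_self[OF h(1)] h(3)] .
  then show ?thesis by (rule vgi_mono) simp
qed

lemma cauchy_cmult:
  assumes "adic_cauchy P w" "c \<in> KK" "\<And>n. w n \<in> KK"
  shows "adic_cauchy P (\<lambda>n. c * w n)"
  unfolding cauchy_iff
proof
  fix N
  obtain M where M: "\<forall>m\<ge>M. \<forall>n\<ge>M. vgi (int (N + nat \<bar>kord P c\<bar>)) (w m - w n)"
    using assms(1) unfolding cauchy_iff by blast
  have "\<forall>m\<ge>M. \<forall>n\<ge>M. vgi (int N) (c * w m - c * w n)"
    using vgi_cmult[OF assms(2), of "w _ - w _" N] M assms(3) by (simp add: right_diff_distrib)
  then show "\<exists>M. \<forall>m\<ge>M. \<forall>n\<ge>M. vgi (int N) (c * w m - c * w n)" by blast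
qed

lemma null_cmult:
  assumes "adic_null P f" "c \<in> KK" "\<And>n. f n \<in> KK"
  shows "adic_null P (\<lambda>n. c * f n)"
  unfolding null_iff
proof
  fix N
  obtain M where M: "\<forall>n\<ge>M. vgi (int (N + nat \<bar>kord P c\<bar>)) (f n)"
    using assms(1) unfolding null_iff by blast
  have "\<forall>n\<ge>M. vgi (int N) (c * f n)"
    using vgi_cmult[OF assms(2), of "f _" N] M assms(3) by simp
  then show "\<exists>M. \<forall>n\<ge>M. vgi (int N) (c * f n)" by blast
qed

lemma null_mult_bdd:
  assumes "adic_null P f" "\<And>n. vgi 0 (g n)"
  shows "adic_null P (\<lambda>n. f n * g n)"
  unfolding null_iff
proof
  fix N
  obtain M where M: "\<forall>n\<ge>M. vgi (int N) (f n)"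
    using assms(1) unfolding null_iff by blast
  then have "\<forall>n\<ge>M. vgi (int N) (f n * g n)" using vgi_mult[of "int N" _ 0] assms(2) by fastforce
  then show "\<exists>M. \<forall>n\<ge>M. vgi (int N) (f n * g n)" by blast
qed

lemma null_cong: "adic_null P f \<Longrightarrow> (\<And>n. f n = g n) \<Longrightarrow> adic_null P g"
  by (metis ext)

lemma kord_2_ge: "kord P 2 \<ge> 0"
  using kord_OK[of 2] by simp

lemma unit_vgi0: "x \<in> KK \<Longrightarrow> x \<noteq> 0 \<Longrightarrow> kord P x = 0 \<Longrightarrow> vgi 0 x"
  using vgi_iff by simp

lemma newton:
  assumes c: "c \<in> KK" and x0: "x0 \<in> KK" "x0 \<noteq> 0" "kord P x0 = 0"
    and e0: "vgi M (x0^2 - c)" and M: "M \<ge> 2 * kord P 2 + 1"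
  shows "\<exists>x. (\<forall>n. x n \<in> KK \<and> x n \<noteq> 0 \<and> kord P (x n) = 0) \<and> adic_cauchy P x
             \<and> adic_null P (\<lambda>n. x n ^ 2 - c)"
proof -
  define s where "s = kord P 2"
  have s0: "s \<ge> 0" using kord_2_ge s_def by simp
  have Ms: "M \<ge> 2 * s + 1" using M s_def by simp
  define x where "x = rec_nat x0 (\<lambda>n y. y - (y^2 - c) / (2 * y))"
  have x0': "x 0 = x0" unfolding x_def by simp
  have xS: "x (Suc n) = x n - (x n ^ 2 - c) / (2 * x n)" for n unfolding x_def by simp
  have step: "x (Suc n) \<in> KK \<and> x (Suc n) \<noteq> 0 \<and> kord P (x (Suc n)) = 0 \<and> vgi (M + int (Suc n)) (x (Suc n) ^ 2 - c)
       \<and> vgi (M + int n - s) (x (Suc n) - x n)"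
    if I: "x n \<in> KK" "x n \<noteq> 0" "kord P (x n) = 0" "vgi (M + int n) (x n ^ 2 - c)" for n
  proof -
    define y where "y = x n"
    define e where "e = y^2 - c"
    have y: "y \<in> KK" "y \<noteq> 0" "kord P y = 0" using I y_def by auto
    have eK: "e \<in> KK" using y c e_def by simp
    have ev: "vgi (M + int n) e" using I e_def y_def by simp
    have u: "2 * y^2 \<in> KK" "2 * y^2 \<noteq> 0" "kord P (2 * y^2) = s"
      using y kord_mult[of 2 "y^2"] kord_power[of y 2] s_def by auto
    define t where "t = e / (2 * y^2)"
    have tK: "t \<in> KK" using eK u t_def by simp
    have tv: "vgi (M + int n - s) t" using vgi_divide[OF eK u(1,2) ev] u(3) t_def by simp
    then have tv1: "vgi 1 t" by (rule vgi_mono) (use Ms s0 in simp)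
    have xs0: "x (Suc n) = y - e / (2 * y)" using xS[of n] y_def e_def by simp
    have "y - e / (2 * y) = y * (1 - t)" using y(2) unfolding t_def
      by (simp add: field_simps power2_eq_square)
    then have xs: "x (Suc n) = y * (1 - t)" using xs0 by simp
    have "1 + - t \<noteq> 0 \<and> kord P (1 + - t) = kord P 1"
      apply (rule kord_strict)
      using tK tv1 vgi_iff[of "-t" 1] vgi_uminus[OF tv1] by auto
    then have ot: "1 - t \<noteq> 0" "kord P (1 - t) = 0" by simp_all
    have xK: "x (Suc n) \<in> KK" using xs y tK by simp
    have xnz: "x (Suc n) \<noteq> 0" using xs y ot by simp
    have xk: "kord P (x (Suc n)) = 0" using xs y ot kord_mult[of y "1 - t"] tK by simp
    have eq2: "x (Suc n) ^ 2 - c = e^2 / (4 * y^2)"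
      unfolding xs0 using y(2) unfolding e_def
      by (simp add: field_simps power2_eq_square)
    have u4: "4 * y^2 \<in> KK" "4 * y^2 \<noteq> 0" "kord P (4 * y^2) = 2 * s"
    proof -
      have e4: "4 * y^2 = 2 * (2 * y^2)" by simp
      show "4 * y^2 \<in> KK" using y by simp
      show "4 * y^2 \<noteq> 0" using y by simp
      have "kord P (2 * (2 * y^2)) = kord P 2 + kord P (2 * y^2)"
        using kord_mult[of 2 "2 * y^2"] u(1,2) by simp
      then show "kord P (4 * y^2) = 2 * s" unfolding e4 using u(3) s_def by simp
    qed
    have "vgi ((M + int n) + (M + int n)) (e * e)" by (rule vgi_mult[OF ev ev])
    then have "vgi ((M + int n) + (M + int n) - 2 * s) (e^2 / (4 * y^2))"
      using vgi_divide[OF _ u4(1,2)] eK u4(3) by (simp add: power2_eq_square)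
    then have v2: "vgi (M + int (Suc n)) (x (Suc n) ^ 2 - c)"
      unfolding eq2 by (rule vgi_mono) (use Ms in simp)
    have "x (Suc n) - x n = - (y * t)" using xs y_def by (simp add: algebra_simps)
    moreover have "vgi (0 + (M + int n - s)) (y * t)" using vgi_mult[OF unit_vgi0[OF y] tv] .
    ultimately have "vgi (M + int n - s) (x (Suc n) - x n)" using vgi_uminus by simp
    then show ?thesis using xK xnz xk v2 by simp
  qed
  have inv: "x n \<in> KK \<and> x n \<noteq> 0 \<and> kord P (x n) = 0 \<and> vgi (M + int n) (x n ^ 2 - c)" for n
  proof (induction n)
    case 0 then show ?case using x0 e0 x0' by simp
  next
    case (Suc n) then show ?case using step by blast
  qed
  have diff1: "vgi (int n + 1) (x (Suc n) - x n)" for n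
  proof -
    have "vgi (M + int n - s) (x (Suc n) - x n)" using step[of n] inv[of n] by blast
    then show ?thesis by (rule vgi_mono) (use Ms s0 in simp)
  qed
  have diffn: "vgi (int n) (x m - x n)" if "n \<le> m" for m n
    using that
  proof (induction m)
    case 0 then show ?case by simp
  next
    case (Suc m)
    show ?case
    proof (cases "n = Suc m")
      case True then show ?thesis by simp
    next
      case False
      then have "n \<le> m" using Suc by simp
      then have "vgi (int n) (x m - x n)" using Suc by simp
      moreover have "vgi (int n) (x (Suc m) - x m)" using diff1[of m] by (rule vgi_mono) (use \<open>n \<le> m\<close> in simp)
      ultimately have "vgi (int n) ((x (Suc m) - x m) + (x m - x n))" using vgi_add by blast
      then show ?thesis by simp
    qed
  qed
  have "adic_cauchy P x"
    unfolding cauchy_iff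
  proof
    fix N
    have "\<forall>m\<ge>N. \<forall>n\<ge>N. vgi (int N) (x m - x n)"
    proof (intro allI impI)
      fix m n assume "N \<le> m" "N \<le> n"
      then have "vgi (int N) (x m - x N)" "vgi (int N) (x n - x N)" using diffn by auto
      then have "vgi (int N) ((x m - x N) - (x n - x N))" by (rule vgi_diff)
      then show "vgi (int N) (x m - x n)" by simp
    qed
    then show "\<exists>M. \<forall>m\<ge>M. \<forall>n\<ge>M. vgi (int N) (x m - x n)" by blast
  qed
  moreover have "adic_null P (\<lambda>n. x n ^ 2 - c)"
    unfolding null_iff
  proof
    fix N
    have "\<forall>n\<ge>N. vgi (int N) (x n ^ 2 - c)"
    proof (intro allI impI)
      fix n assume "N \<le> n"
      have "vgi (M + int n) (x n ^ 2 - c)" using inv by blast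
      then show "vgi (int N) (x n ^ 2 - c)" by (rule vgi_mono) (use Ms s0 \<open>N \<le> n\<close> in simp)
    qed
    then show "\<exists>M. \<forall>n\<ge>M. vgi (int N) (x n ^ 2 - c)" by blast
  qed
  ultimately show ?thesis using inv by blast
qed

end

lemma OK_rep_unique:
  assumes "of_int a + of_int b * om = of_int c + of_int d * om"
  shows "a = c \<and> b = d"
proof -
  have "Im (of_int a + of_int b * om) = Im (of_int c + of_int d * om)" using assms by simp
  then have "b = d" by simp
  moreover have "Re (of_int a + of_int b * om) = Re (of_int c + of_int d * om)" using assms by simp
  ultimately show ?thesis by simp
qed

lemma dv_pi2_iff: "OK_dvd pi2 (of_int a + of_int b * om) \<longleftrightarrow> even a"
proof
  assume "OK_dvd pi2 (of_int a + of_int b * om)"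
  then obtain c where c: "c \<in> OK" "of_int a + of_int b * om = pi2 * c" unfolding OK_dvd_def by blast
  then obtain e f :: int where ef: "c = of_int e + of_int f * om" unfolding OK_iff by blast
  have "pi2 * c = - (of_int e * om + of_int f * (om * om))" unfolding ef pi2_om by (simp add: algebra_simps)
  also have "\<dots> = of_int (2 * f) + of_int (- e - f) * om" unfolding om_sq by (simp add: algebra_simps)
  finally have "a = 2 * f" using c(2) OK_rep_unique by metis
  then show "even a" by simp
next
  assume "even a"
  then obtain f where f: "a = 2 * f" by blast
  have "pi2 * (of_int (- b - f) + of_int f * om) = - (of_int (-b-f) * om + of_int f * (om * om))"
    unfolding pi2_om by (simp add: algebra_simps)
  also have "\<dots> = of_int a + of_int b * om" unfolding om_sq f by (simp add: algebra_simps)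
  finally show "OK_dvd pi2 (of_int a + of_int b * om)" unfolding OK_dvd_def
    by (metis OK_add OK_intI OK_mult OK_om)
qed

lemma dv_pi2bar_iff: "OK_dvd pi2bar (of_int a + of_int b * om) \<longleftrightarrow> even (a + b)"
proof
  assume "OK_dvd pi2bar (of_int a + of_int b * om)"
  then obtain c where c: "c \<in> OK" "of_int a + of_int b * om = pi2bar * c" unfolding OK_dvd_def by blast
  then obtain e f :: int where ef: "c = of_int e + of_int f * om" unfolding OK_iff by blast
  have "pi2bar * c = of_int e * om + of_int f * (om * om) - of_int e - of_int f * om" unfolding ef pi2bar_om by (simp add: algebra_simps)
  also have "\<dots> = of_int (- e - 2 * f) + of_int e * om" unfolding om_sq by (simp add: algebra_simps)
  finally have "a = - e - 2 * f \<and> b = e" using c(2) OK_rep_unique by metis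
  then show "even (a + b)" by simp
next
  assume "even (a + b)"
  then obtain f where f: "a + b = 2 * f" by blast
  have "pi2bar * (of_int b + of_int (- f) * om) = of_int b * om + of_int (-f) * (om * om) - of_int b - of_int (-f) * om"
    unfolding pi2bar_om by (simp add: algebra_simps)
  also have "\<dots> = of_int (- b + 2 * f) + of_int b * om" unfolding om_sq by (simp add: algebra_simps)
  also have "- b + 2 * f = a" using f by simp
  finally show "OK_dvd pi2bar (of_int a + of_int b * om)" unfolding OK_dvd_def
    by (metis OK_add OK_intI OK_mult OK_om)
qed

lemma OK_mult_rep: "(of_int a + of_int b * om) * (of_int c + of_int d * om) = of_int (a*c - 2*b*d) + of_int (a*d + b*c + b*d) * om"
proof -
  have "(of_int a + of_int b * om) * (of_int c + of_int d * om) = of_int a * of_int c + (of_int a * of_int d + of_int b * of_int c) * om + of_int b * of_int d * (om * om)"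
    by (simp add: algebra_simps)
  also have "\<dots> = of_int (a*c - 2*b*d) + of_int (a*d + b*c + b*d) * om"
    unfolding om_sq by (simp add: algebra_simps)
  finally show ?thesis .
qed

lemma pi2_prime: "OK_prime pi2"
  unfolding OK_prime_def
proof (intro conjI)
  show "pi2 \<in> OK" by simp
  show "pi2 \<noteq> 0" using pi2_pi2bar by auto
  show "\<not> (\<exists>u\<in>OK. pi2 * u = 1)"
  proof
    assume "\<exists>u\<in>OK. pi2 * u = 1"
    then have "OK_dvd pi2 (of_int 1 + of_int 0 * om)" unfolding OK_dvd_def by auto
    then show False unfolding dv_pi2_iff by simp
  qed
  show "\<forall>a\<in>OK. \<forall>b\<in>OK. OK_dvd pi2 (a * b) \<longrightarrow> OK_dvd pi2 a \<or> OK_dvd pi2 b"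
  proof (intro ballI impI)
    fix x y assume "x \<in> OK" "y \<in> OK" "OK_dvd pi2 (x * y)"
    then obtain a b c d where "x = of_int a + of_int b * om" "y = of_int c + of_int d * om"
      unfolding OK_iff by blast
    note xy = this
    then have "OK_dvd pi2 (of_int (a*c - 2*b*d) + of_int (a*d + b*c + b*d) * om)"
      using \<open>OK_dvd pi2 (x * y)\<close> OK_mult_rep by metis
    then have "even (a*c - 2*b*d)" by (simp only: dv_pi2_iff)
    then have "even a \<or> even c" by simp
    then show "OK_dvd pi2 x \<or> OK_dvd pi2 y" unfolding xy dv_pi2_iff .
  qed
qed

lemma pi2bar_prime: "OK_prime pi2bar"
  unfolding OK_prime_def
proof (intro conjI)
  show "pi2bar \<in> OK" by simp
  show "pi2bar \<noteq> 0" using pi2_pi2bar by auto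
  show "\<not> (\<exists>u\<in>OK. pi2bar * u = 1)"
  proof
    assume "\<exists>u\<in>OK. pi2bar * u = 1"
    then have "OK_dvd pi2bar (of_int 1 + of_int 0 * om)" unfolding OK_dvd_def by auto
    then show False unfolding dv_pi2bar_iff by simp
  qed
  show "\<forall>a\<in>OK. \<forall>b\<in>OK. OK_dvd pi2bar (a * b) \<longrightarrow> OK_dvd pi2bar a \<or> OK_dvd pi2bar b"
  proof (intro ballI impI)
    fix x y assume "x \<in> OK" "y \<in> OK" "OK_dvd pi2bar (x * y)"
    then obtain a b c d where "x = of_int a + of_int b * om" "y = of_int c + of_int d * om"
      unfolding OK_iff by blast
    note xy = this
    have e: "a*c - 2*b*d + (a*d + b*c + b*d) = (a+b)*(c+d) - 2 * (b * d)"
      by (simp add: algebra_simps)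
    have "OK_dvd pi2bar (of_int (a*c - 2*b*d) + of_int (a*d + b*c + b*d) * om)"
      using \<open>OK_dvd pi2bar (x * y)\<close> OK_mult_rep xy by metis
    then have "even (a*c - 2*b*d + (a*d + b*c + b*d))" by (simp only: dv_pi2bar_iff)
    then have "even ((a+b)*(c+d))" unfolding e by simp
    then have "even (a + b) \<or> even (c + d)" by simp
    then show "OK_dvd pi2bar x \<or> OK_dvd pi2bar y" unfolding xy dv_pi2bar_iff .
  qed
qed

lemma nd_pi2_pi2bar: "\<not> OK_dvd pi2 pi2bar"
  using dv_pi2_iff[of "-1" 1] unfolding pi2bar_om by simp

lemma nd_pi2bar_pi2: "\<not> OK_dvd pi2bar pi2"
  using dv_pi2bar_iff[of 0 "-1"] unfolding pi2_om by simp

locale tw = kp +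
  fixes Q :: complex
  assumes Q_OK[simp]: "Q \<in> OK" and PQ: "P * Q = 2" and ndQ: "\<not> dv Q"
begin

lemma dv_2: "dv 2" using PQ dv_PI[OF Q_OK] by metis

lemma kord_Q: "kord P Q = 0" using kord_unit ndQ by simp

lemma kord_2: "kord P 2 = 1"
  using kord_eq[of Q 1 2 1] ndQ PQ by simp

lemma dv_even: "even m \<Longrightarrow> dv (of_int m)"
proof -
  assume "even m" then obtain k where "m = 2 * k" by blast
  then have "of_int m = P * (Q * of_int k)" using PQ by (simp add: mult.assoc[symmetric])
  then show ?thesis using dv_PI[of "Q * of_int k"] by simp
qed

lemma nd_odd: "odd m \<Longrightarrow> \<not> dv (of_int m)"
proof
  assume "odd m" "dv (of_int m)"
  then obtain k where "m = 2 * k + 1" by (meson oddE)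
  then have "(1::complex) = of_int m - of_int (2 * k)" by simp
  moreover have "dv (of_int m - of_int (2 * k))" using dv_diff[OF \<open>dv (of_int m)\<close> dv_even[of "2*k"]] by simp
  ultimately show False using nd_1 by simp
qed

lemma kord_odd: "odd m \<Longrightarrow> kord P (of_int m) = 0"
  using kord_unit nd_odd by simp

lemma kord_odd_nat: "odd (m::nat) \<Longrightarrow> kord P (of_nat m) = 0"
  using kord_odd[of "int m"] by simp

lemma vgi_pow2: "(2::int)^N dvd m \<Longrightarrow> vgi (int N) (of_int m)"
proof -
  assume "(2::int)^N dvd m" then obtain k where k: "m = 2^N * k" by blast
  have "vgi (int N + 0) ((P * Q)^N * of_int k)"
    unfolding power_mult_distrib mult.assoc
    by (rule vgi_mult) (use vgi_Ppow[of "int N"] vgi_OK in auto)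
  then show ?thesis using k PQ by simp
qed

lemma kord_KS: "odd p \<Longrightarrow> odd q \<Longrightarrow> kord P ((-1)^a * P^b * Q^c * of_nat p ^ e * of_nat q ^ f) = int b"
proof -
  assume pq: "odd p" "odd q"
  have m1: "kord P (-1) = 0" using kord_odd[of "-1"] by simp
  have "p > 0" "q > 0" using pq by (auto intro: odd_pos)
  then have nz: "(of_nat p :: complex) \<noteq> 0" "(of_nat q :: complex) \<noteq> 0" "Q \<noteq> 0" using PQ by auto
  show ?thesis
    using m1 nz kord_odd_nat[OF pq(1)] kord_odd_nat[OF pq(2)] kord_Q OK_KK[OF Q_OK]
    by (simp add: kord_mult kord_power)
qed

lemma no_point_odd:
  assumes d: "d \<in> KK" "d \<noteq> 0" "odd (kord P d)" and pq: "odd p" "odd q"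
  shows "\<not> loc_solv P p q d"
proof
  assume "loc_solv P p q d"
  then obtain w z where wz: "\<And>n. w n \<in> KK" "\<And>n. z n \<in> KK" "adic_null P (\<lambda>n. Cd p q d (w n) (z n))"
    unfolding loc_solv_def by blast
  define b where "b = kord P d"
  obtain n where n: "vgi (int (nat (2 * b + 1))) (Cd p q d (w n) (z n))"
    using wz(3) unfolding null_iff by blast
  define W where "W = w n"
  define Z where "Z = z n"
  have WZ: "W \<in> KK" "Z \<in> KK" using wz W_def Z_def by auto
  define F where "F = Cd p q d W Z"
  have FK: "F \<in> KK" unfolding F_def Cd_def using WZ d by simp
  have Fv: "vgi (2 * b + 1) F"
    using n unfolding F_def W_def Z_def by (rule vgi_mono) simp
  define X where "X = d + of_nat p * Z^2"
  define Y where "Y = d + of_nat q * Z^2"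
  have XYK: "X \<in> KK" "Y \<in> KK" using WZ d X_def Y_def by auto
  have eqF: "d * W^2 = X * Y + F"
    unfolding F_def Cd_def X_def Y_def by (simp add: algebra_simps power2_eq_square power4_eq_xxxx)
  have kp0: "kord P (of_nat p) = 0" "kord P (of_nat q) = 0" using kord_odd_nat pq by auto
  have "p > 0" "q > 0" using pq by (auto intro: odd_pos)
  then have pqnz: "(of_nat p :: complex) \<noteq> 0" "(of_nat q :: complex) \<noteq> 0" by auto
  have XY: "X * Y \<noteq> 0 \<and> kord P (X * Y) \<le> 2 * b \<and> even (kord P (X * Y))"
  proof (cases "Z = 0")
    case True
    then have "X = d" "Y = d" using X_def Y_def by auto
    then show ?thesis using d kord_mult[of d d] b_def by simp
  next
    case False
    define t where "t = kord P Z"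
    have kZ: "kord P (of_nat p * Z^2) = 2 * t" "kord P (of_nat q * Z^2) = 2 * t"
      using kp0 pqnz False WZ by (simp_all add: kord_mult kord_power t_def)
    have pZ: "of_nat p * Z^2 \<in> KK" "of_nat q * Z^2 \<in> KK" "of_nat p * Z^2 \<noteq> 0" "of_nat q * Z^2 \<noteq> 0"
      using WZ False pqnz by auto
    have "2 * t \<noteq> b" using d(3) b_def by presburger
    then consider "2 * t < b" | "b < 2 * t" by linarith
    then show ?thesis
    proof cases
      case 1
      have "X \<noteq> 0 \<and> kord P X = 2 * t"
        using kord_strict[of "of_nat p * Z^2" d] pZ d kZ 1 b_def unfolding X_def by (simp add: add.commute)
      moreover have "Y \<noteq> 0 \<and> kord P Y = 2 * t"
        using kord_strict[of "of_nat q * Z^2" d] pZ d kZ 1 b_def unfolding Y_def by (simp add: add.commute)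
      ultimately show ?thesis using kord_mult[of X Y] XYK 1 by simp
    next
      case 2
      have "X \<noteq> 0 \<and> kord P X = b"
        using kord_strict[of d "of_nat p * Z^2"] pZ d kZ 2 b_def unfolding X_def by simp
      moreover have "Y \<noteq> 0 \<and> kord P Y = b"
        using kord_strict[of d "of_nat q * Z^2"] pZ d kZ 2 b_def unfolding Y_def by simp
      ultimately show ?thesis using kord_mult[of X Y] XYK by simp
    qed
  qed
  have "X * Y + F \<noteq> 0 \<and> kord P (X * Y + F) = kord P (X * Y)"
    apply (rule kord_strict)
    using XYK FK XY vgi_iff[of F "2 * b + 1"] Fv by auto
  then have hW: "d * W^2 \<noteq> 0" "kord P (d * W^2) = kord P (X * Y)" using eqF by auto
  then have "W \<noteq> 0" by auto
  then have "kord P (d * W^2) = b + 2 * kord P W"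
    using kord_mult[of d "W^2"] kord_power[of W 2] d WZ b_def by simp
  then have "even (b + 2 * kord P W)" using hW XY by metis
  then show False using d(3) b_def by simp
qed

end

interpretation pi2: tw pi2 pi2bar
  by unfold_locales (simp_all add: pi2_prime pi2_pi2bar nd_pi2_pi2bar)

interpretation pi2bar: tw pi2bar pi2
  by unfold_locales (simp_all add: pi2bar_prime pi2_pi2bar mult.commute nd_pi2bar_pi2)

lemma Cd_m1: "Cd p q (-1) w z = - (w^2) - (1 - of_nat p * z^2) * (1 - of_nat q * z^2)"
  unfolding Cd_def by (simp add: algebra_simps power2_eq_square power4_eq_xxxx)

context tw
begin

lemma vgi_nat: "vgi 0 (of_nat n)" using vgi_OK by simp

lemma sol_w0:
  assumes r: "r mod 8 = 1" and r': "odd r'"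
  shows "\<exists>z. (\<forall>n. z n \<in> KK) \<and> adic_cauchy P z \<and>
     adic_null P (\<lambda>n. - (1 - of_nat r * z n ^ 2) * (1 - of_nat r' * z n ^ 2))"
proof -
  have r0: "(of_nat r :: complex) \<noteq> 0" using r by (auto)
  have "odd r" using r by presburger
  then have kr: "kord P (of_nat r) = 0" using kord_odd_nat by blast
  have "(8::int) dvd int r - 1" using r by presburger
  then have "(2::int)^3 dvd int r - 1" by simp
  then have "vgi (int 3) (of_int (int r - 1))" by (rule vgi_pow2)
  then have "vgi 3 (of_int (int r - 1))" by simp
  then have "vgi (3 - kord P (of_nat r)) ((of_nat r - 1) / of_nat r)"
    using vgi_divide[of "of_nat r - 1" "of_nat r" 3] r0 by simp
  moreover have "(of_nat r - 1) / of_nat r = (1::complex)^2 - 1 / of_nat r" using r0 by (simp add: field_simps)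
  ultimately have "vgi 3 (1^2 - 1 / of_nat r)" using kr by simp
  then obtain z where z: "\<forall>n. z n \<in> KK \<and> z n \<noteq> 0 \<and> kord P (z n) = 0" "adic_cauchy P z"
    "adic_null P (\<lambda>n. z n ^ 2 - 1 / of_nat r)"
    using newton[of "1 / of_nat r" 1 3] kord_2 by auto
  have g: "vgi 0 (of_nat r * (1 - of_nat r' * z n ^ 2))" for n
  proof -
    from z(1) have "z n \<in> KK" "z n \<noteq> 0" "kord P (z n) = 0" by auto
    then have "vgi 0 (z n)" by (rule unit_vgi0)
    then have "vgi (0 + 0) (z n * z n)" using vgi_mult by blast
    then have "vgi (0 + 0) (of_nat r' * (z n * z n))" using vgi_mult[OF vgi_nat] by fastforce
    then have "vgi 0 (1 - of_nat r' * z n ^ 2)" using vgi_diff[OF vgi_OK[OF OK_1]] by (simp add: power2_eq_square)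
    then show ?thesis using vgi_mult[OF vgi_nat] by fastforce
  qed
  have "adic_null P (\<lambda>n. (z n ^ 2 - 1 / of_nat r) * (of_nat r * (1 - of_nat r' * z n ^ 2)))"
    by (rule null_mult_bdd[OF z(3) g])
  moreover have "(z n ^ 2 - 1 / of_nat r) * (of_nat r * (1 - of_nat r' * z n ^ 2))
      = - (1 - of_nat r * z n ^ 2) * (1 - of_nat r' * z n ^ 2)" for n
    using r0 by (simp add: field_simps)
  ultimately show ?thesis using z by (intro exI[of _ z]) simp
qed

lemma exist_2adic:
  assumes pq: "odd p" "q = p + 2" and m: "p mod 8 \<in> {1, 3, 7}"
  shows "loc_solv P p q (-1)"
proof -
  consider "p mod 8 = 1" | "p mod 8 = 7" | "p mod 8 = 3" using m by auto
  then show ?thesis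
  proof cases
    case 1
    obtain z where z: "\<forall>n. z n \<in> KK" "adic_cauchy P z"
      "adic_null P (\<lambda>n. - (1 - of_nat p * z n ^ 2) * (1 - of_nat q * z n ^ 2))"
      using sol_w0[OF 1, of q] pq by auto
    have "adic_null P (\<lambda>n. Cd p q (-1) 0 (z n))"
      by (rule null_cong[OF z(3)]) (simp add: Cd_m1 algebra_simps)
    then show ?thesis unfolding loc_solv_def
      by (intro exI[of _ "\<lambda>n. 0"] exI[of _ z]) (use z cauchy_const in simp)
  next
    case 2
    then have "q mod 8 = 1" using pq by presburger
    then obtain z where z: "\<forall>n. z n \<in> KK" "adic_cauchy P z"
      "adic_null P (\<lambda>n. - (1 - of_nat q * z n ^ 2) * (1 - of_nat p * z n ^ 2))"
      using sol_w0[of q p] pq by auto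
    have "adic_null P (\<lambda>n. Cd p q (-1) 0 (z n))"
      by (rule null_cong[OF z(3)]) (simp add: Cd_m1 algebra_simps)
    then show ?thesis unfolding loc_solv_def
      by (intro exI[of _ "\<lambda>n. 0"] exI[of _ z]) (use z cauchy_const in simp)
  next
    case 3
    define c :: int where "c = - ((16 - int p) * (16 - int q))"
    have "p = 8 * (p div 8) + 3" using div_mult_mod_eq[of p 8] 3 by linarith
    then have k: "int p = 8 * int (p div 8) + 3" by linarith
    define k where "k = int (p div 8)"
    have k: "int p = 8 * k + 3" using k k_def by simp
    have "1 - c = 8 * (18 - 24 * k + 8 * k^2)"
      unfolding c_def using pq k by (simp add: algebra_simps power2_eq_square)
    moreover have e8: "(2::int)^3 = 8" by simp
    ultimately have "(2::int)^3 dvd 1 - c" using dvd_triv_left[of 8 "18 - 24 * k + 8 * k^2"] by metis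
    then have "vgi (int 3) (of_int (1 - c))" by (rule vgi_pow2)
    then have "vgi 3 (of_int (1 - c))" by simp
    then have "vgi 3 (1^2 - of_int c)" by simp
    then obtain y where y: "\<forall>n. y n \<in> KK \<and> y n \<noteq> 0 \<and> kord P (y n) = 0" "adic_cauchy P y"
      "adic_null P (\<lambda>n. y n ^ 2 - of_int c)"
      using newton[of "of_int c" 1 3] kord_2 by auto
    have yK: "\<And>n. y n \<in> KK" using y by simp
    have w: "adic_cauchy P (\<lambda>n. (1/16) * y n)" by (rule cauchy_cmult[OF y(2) _ yK]) simp
    have f: "adic_null P (\<lambda>n. (- 1/256) * (y n ^ 2 - of_int c))"
      by (rule null_cmult[OF y(3)]) (use yK in simp_all)
    have e: "Cd p q (-1) ((1/16) * y n) (1/4) = (- 1/256) * (y n ^ 2 - of_int c)" for n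
      unfolding Cd_m1 c_def using pq by (simp add: field_simps power2_eq_square)
    show ?thesis unfolding loc_solv_def
      by (intro exI[of _ "\<lambda>n. (1/16) * y n"] exI[of _ "\<lambda>n. 1/4"]) (use w f e yK cauchy_const in simp)
  qed
qed

end

locale tw2 = tw +
  assumes rep: "x \<in> OK \<Longrightarrow> \<exists>m::int. vgi (int N) (x - of_int m)"
begin

lemma even_vgi1: "even m \<Longrightarrow> vgi 1 (of_int m)"
  using vgi_pow2[of 1 m] by simp

lemma rep_KK:
  assumes x: "x \<in> KK" "vgi 0 x"
  shows "\<exists>m::int. vgi (int N) (x - of_int m)"
proof -
  obtain a b where ab: "a \<in> OK" "b \<in> OK" "\<not> dv b" "x * b = a"
    using x(2) unfolding vgi_def by auto
  have bK: "b \<in> KK" "b \<noteq> 0" "kord P b = 0" using ab OK_KK nd_nz kord_unit by auto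
  define N' where "N' = N + 1"
  obtain ma where ma: "vgi (int N') (a - of_int ma)" using rep ab(1) by blast
  obtain mb where mb: "vgi (int N') (b - of_int mb)" using rep ab(2) by blast
  have "odd mb"
  proof
    assume "even mb"
    then have "vgi 1 (of_int mb)" by (rule even_vgi1)
    moreover have "vgi 1 (b - of_int mb)" using mb by (rule vgi_mono) (simp add: N'_def)
    ultimately have "vgi 1 (of_int mb + (b - of_int mb))" by (rule vgi_add)
    then show False using vgi_iff[of b 1] bK by simp
  qed
  then have "coprime mb (2 ^ N')" by simp
  then obtain s where s: "[mb * s = 1] (mod 2 ^ N')" using cong_solve_coprime_int by blast
  then have "(2::int) ^ N' dvd mb * s - 1" by (simp add: cong_iff_dvd_diff)
  then have "(2::int) ^ N' dvd 1 - mb * s" by (simp add: dvd_diff_commute)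
  then have v1: "vgi (int N') (of_int (1 - mb * s))" by (rule vgi_pow2)
  have eq: "a - of_int (ma * s) * b = (a - of_int ma) - (of_int ma * of_int s) * (b - of_int mb) + of_int ma * of_int (1 - mb * s)"
    by (simp add: algebra_simps)
  have "vgi (int N') (a - of_int ma - (of_int ma * of_int s) * (b - of_int mb) + of_int ma * of_int (1 - mb * s))"
    by (intro vgi_add vgi_diff ma)
       (use vgi_mult[OF vgi_OK[of "of_int ma * of_int s"] mb] vgi_mult[OF vgi_OK[of "of_int ma"] v1] in simp_all)
  then have "vgi (int N') (a - of_int (ma * s) * b)" unfolding eq .
  then have "vgi (int N' - kord P b) ((a - of_int (ma * s) * b) / b)"
    using vgi_divide[of "a - of_int (ma * s) * b" b] bK ab OK_KK by simp
  moreover have "(a - of_int (ma * s) * b) / b = x - of_int (ma * s)"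
    using ab(4) bK by (simp add: field_simps)
  ultimately have "vgi (int N') (x - of_int (ma * s))" using bK by simp
  then have "vgi (int N) (x - of_int (ma * s))" by (rule vgi_mono) (simp add: N'_def)
  then show ?thesis by blast
qed

lemma odd_sq: "odd (m::int) \<Longrightarrow> 8 dvd m^2 - 1"
proof -
  assume "odd m"
  then obtain j where j: "m = 2 * j + 1" by (meson oddE)
  have "even (j * (j + 1))" by simp
  then obtain t where t: "j * (j + 1) = 2 * t" by blast
  have "m^2 - 1 = 4 * (j * (j + 1))" unfolding j by (simp add: algebra_simps power2_eq_square)
  also have "\<dots> = 8 * t" using t by simp
  finally show ?thesis by simp
qed

lemma unitsq:
  assumes x: "x \<in> KK" "x \<noteq> 0" "kord P x = 0"
  shows "vgi 3 (x^2 - 1)"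
proof -
  have x0: "vgi 0 x" using unit_vgi0 x by blast
  obtain m where m: "vgi (int 3) (x - of_int m)" using rep_KK[OF x(1) x0] by blast
  have "odd m"
  proof
    assume "even m"
    then have "vgi 1 (of_int m)" by (rule even_vgi1)
    moreover have "vgi 1 (x - of_int m)" using m by (rule vgi_mono) simp
    ultimately have "vgi 1 (of_int m + (x - of_int m))" by (rule vgi_add)
    then show False using vgi_iff[of x 1] x by simp
  qed
  then have "(2::int)^3 dvd m^2 - 1" using odd_sq by simp
  then have v8: "vgi (int 3) (of_int (m^2 - 1))" by (rule vgi_pow2)
  have xm: "vgi 0 (x + of_int m)"
  proof -
    have "vgi 0 (x - of_int m)" using m by (rule vgi_mono) simp
    moreover have "vgi 0 (2 * of_int m)" using vgi_OK[of "2 * of_int m"] by simp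
    ultimately have "vgi 0 ((x - of_int m) + 2 * of_int m)" by (rule vgi_add)
    then show ?thesis by (simp add: algebra_simps)
  qed
  have A: "vgi (int 3 + 0) ((x - of_int m) * (x + of_int m))" by (rule vgi_mult[OF m xm])
  have "vgi (int 3 + 0) ((x - of_int m) * (x + of_int m) + of_int (m^2 - 1))"
    by (rule vgi_add[OF A]) (use v8 in simp)
  moreover have "(x - of_int m) * (x + of_int m) + of_int (m^2 - 1) = x^2 - 1"
    by (simp add: algebra_simps power2_eq_square)
  ultimately have "vgi (int 3 + 0) (x^2 - 1)" by metis
  then show ?thesis by simp
qed

lemma kord_4: "kord P 4 = 2"
  using kord_mult[of 2 2] kord_2 by simp

lemma kord_2odd: "odd j \<Longrightarrow> kord P (2 * of_int j) = 1"
  using kord_mult[of 2 "of_int j"] kord_2 kord_odd[of j] by (auto simp: odd_pos)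

lemma kord_4odd: "odd j \<Longrightarrow> kord P (4 * of_int j) = 2"
  using kord_mult[of 4 "of_int j"] kord_4 kord_odd[of j] by auto

lemma no_point_5:
  assumes pq: "p mod 8 = 5" "q = p + 2"
  shows "\<not> loc_solv P p q (-1)"
proof
  assume "loc_solv P p q (-1)"
  then obtain w z where wz: "\<And>n. w n \<in> KK" "\<And>n. z n \<in> KK" "adic_null P (\<lambda>n. Cd p q (-1) (w n) (z n))"
    unfolding loc_solv_def by blast
  obtain n where n: "vgi (int 10) (Cd p q (-1) (w n) (z n))"
    using wz(3) unfolding null_iff by blast
  define W where "W = w n"
  define Z where "Z = z n"
  have WZ: "W \<in> KK" "Z \<in> KK" using wz W_def Z_def by auto
  define F where "F = Cd p q (-1) W Z"
  have FK: "F \<in> KK" unfolding F_def Cd_def using WZ by simp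
  have Fv: "vgi 10 F" using n unfolding F_def W_def Z_def by simp
  define X where "X = 1 - of_nat p * Z^2"
  define Y where "Y = 1 - of_nat q * Z^2"
  have XYK: "X \<in> KK" "Y \<in> KK" using WZ X_def Y_def by auto
  have eqW: "W^2 = - (X * Y) - F" unfolding F_def Cd_m1 X_def Y_def by simp
  have p0: "(of_nat p :: complex) \<noteq> 0" "(of_nat q :: complex) \<noteq> 0" unfolding of_nat_eq_0_iff using pq by auto
  have "p = 8 * (p div 8) + 5" using div_mult_mod_eq[of p 8] pq by linarith
  then have k: "int p = 8 * int (p div 8) + 5" by linarith
  define k where "k = int (p div 8)"
  have k: "int p = 8 * k + 5" using k k_def by simp
  have Z2: "Z^2 \<in> KK" using WZ by simp
  consider "Z = 0 \<or> 1 \<le> kord P Z" | "Z \<noteq> 0 \<and> kord P Z = 0" | "Z \<noteq> 0 \<and> kord P Z < 0" by linarith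
  then show False
  proof cases
    case 1
    then have z1: "vgi 1 Z" using vgi_iff WZ by auto
    have z2: "vgi 2 (Z^2)" using vgi_mult[OF z1 z1] by (simp add: power2_eq_square)
    have "vgi (0 + 2) (of_nat p * Z^2)" "vgi (0 + 2) (of_nat q * Z^2)"
      using vgi_mult[OF vgi_nat z2] by auto
    have "vgi (0 + 0) (of_nat (p*q))" using vgi_nat[of "p*q"] by simp
    then have "vgi (2 + 2) (of_nat (p*q) * (Z^2 * Z^2))" using vgi_mult[OF _ vgi_mult[OF z2 z2]] by fastforce
    then have "vgi 2 (of_nat (p*q) * (Z^2 * Z^2))" by (rule vgi_mono) simp
    then have "vgi 2 (- (of_nat p * Z^2) - of_nat q * Z^2 + of_nat (p*q) * (Z^2 * Z^2))"
      using \<open>vgi (0 + 2) (of_nat p * Z^2)\<close> \<open>vgi (0 + 2) (of_nat q * Z^2)\<close>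
      by (intro vgi_add vgi_diff vgi_uminus) auto
    moreover have "- (of_nat p * Z^2) - of_nat q * Z^2 + of_nat (p*q) * (Z^2 * Z^2) = X * Y - 1"
      unfolding X_def Y_def by (simp add: algebra_simps)
    ultimately have e1: "vgi 2 (X * Y - 1)" by simp
    have "vgi 2 (- (X * Y - 1) - F)" using vgi_diff[OF vgi_uminus[OF e1] vgi_mono[OF Fv]] by simp
    moreover have eq: "- (X * Y - 1) - F = W^2 + 1" unfolding eqW by (simp add: algebra_simps)
    ultimately have e2: "vgi 2 (W^2 + 1)" by metis
    have "- 1 + (W^2 + 1) \<noteq> 0 \<and> kord P (- 1 + (W^2 + 1)) = kord P (- 1)"
      apply (rule kord_strict)
      using vgi_iff[of "W^2 + 1" 2] e2 WZ kord_uminus[of 1] by auto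
    then have "W^2 \<noteq> 0" "kord P (W^2) = 0" using kord_uminus[of 1] by auto
    then have Wu: "W \<noteq> 0" "kord P W = 0" using kord_power[of W 2] WZ by auto
    have e3: "vgi 3 (W^2 - 1)" using unitsq WZ Wu by blast
    have "vgi 2 ((W^2 + 1) - (W^2 - 1))" using vgi_diff[OF e2 vgi_mono[OF e3]] by simp
    then have "vgi 2 2" by simp
    then show False using vgi_iff[of 2 2] kord_2 by simp
  next
    case 2
    have z3: "vgi 3 (Z^2 - 1)" using unitsq WZ 2 by blast
    have "(2::int)^2 dvd (1 - int p) div 4 * 4" by simp
    have Xe: "X = 4 * of_int (- 2 * k - 1) + (- of_nat p * (Z^2 - 1))"
      unfolding X_def using k by (simp add: algebra_simps of_nat_eq_iff[symmetric]) (metis of_int_of_nat_eq of_int_add of_int_mult of_int_numeral)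
    have Ye: "Y = 2 * of_int (- 4 * k - 3) + (- of_nat q * (Z^2 - 1))"
      unfolding Y_def using k pq by (simp add: algebra_simps) (metis of_int_of_nat_eq of_int_add of_int_mult of_int_numeral)
    have v1: "vgi 3 (- of_nat p * (Z^2 - 1))" "vgi 3 (- of_nat q * (Z^2 - 1))"
      using vgi_mult[OF vgi_uminus[OF vgi_nat] z3] by auto
    have o1: "odd (- 2 * k - 1)" "odd (- 4 * k - 3)" by presburger+
    have "- 2 * k - 1 \<noteq> 0" "- 4 * k - 3 \<noteq> 0" by presburger+
    then have nzo: "(4 * of_int (- 2 * k - 1) :: complex) \<noteq> 0" "(2 * of_int (- 4 * k - 3) :: complex) \<noteq> 0"
      by (simp_all only: mult_eq_0_iff of_int_eq_0_iff) simp_all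
    have "4 * of_int (- 2 * k - 1) + (- of_nat p * (Z^2 - 1)) \<noteq> 0 \<and>
          kord P (4 * of_int (- 2 * k - 1) + (- of_nat p * (Z^2 - 1))) = kord P (4 * of_int (- 2 * k - 1))"
      apply (rule kord_strict)
      using kord_4odd[OF o1(1)] vgi_iff[of "- of_nat p * (Z^2 - 1)" 3] v1 WZ o1 nzo by auto
    then have kX: "X \<noteq> 0" "kord P X = 2" using Xe kord_4odd[OF o1(1)] by auto
    have "2 * of_int (- 4 * k - 3) + (- of_nat q * (Z^2 - 1)) \<noteq> 0 \<and>
          kord P (2 * of_int (- 4 * k - 3) + (- of_nat q * (Z^2 - 1))) = kord P (2 * of_int (- 4 * k - 3))"
      apply (rule kord_strict)
      using kord_2odd[OF o1(2)] vgi_iff[of "- of_nat q * (Z^2 - 1)" 3] v1 WZ o1 nzo by auto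
    then have kY: "Y \<noteq> 0" "kord P Y = 1" using Ye kord_2odd[OF o1(2)] by auto
    have kXY: "- (X * Y) \<noteq> 0" "kord P (- (X * Y)) = 3"
      using kX kY kord_mult[of X Y] kord_uminus[of "X * Y"] XYK by auto
    have "- (X * Y) + - F \<noteq> 0 \<and> kord P (- (X * Y) + - F) = kord P (- (X * Y))"
      apply (rule kord_strict)
      using kXY XYK FK vgi_iff[of "- F" 10] vgi_uminus[OF Fv] by auto
    then have "W^2 \<noteq> 0" "kord P (W^2) = 3" using eqW kXY by auto
    then have "W \<noteq> 0" "2 * kord P W = 3" using kord_power[of W 2] WZ by auto
    then show False by presburger
  next
    case 3
    define U where "U = 1 / Z"
    have UK: "U \<in> KK" "U \<noteq> 0" "kord P U = - kord P Z" using WZ 3 kord_inverse[of Z] U_def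
      by (auto simp: divide_inverse)
    have u1: "vgi 1 U" using UK 3 vgi_iff[of U 1] by auto
    have u2: "vgi 2 (U^2)" using vgi_mult[OF u1 u1] by (simp add: power2_eq_square)
    define V where "V = W * U^2"
    define G where "G = (U^2 - of_nat p) * (U^2 - of_nat q)"
    have ZU: "Z * U = 1" using 3 U_def by simp
    have eqV: "V^2 = - G - F * U^4"
    proof -
      have "V^2 = W^2 * U^4" unfolding V_def by (simp add: power2_eq_square power4_eq_xxxx)
      also have "\<dots> = (- (X * Y) - F) * U^4" using eqW by simp
      also have "X * U^2 = U^2 - of_nat p" unfolding X_def using ZU
        by (simp add: algebra_simps power2_eq_square) (metis mult.assoc mult.left_commute mult_1_right)
      moreover have "Y * U^2 = U^2 - of_nat q" unfolding Y_def using ZU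
        by (simp add: algebra_simps power2_eq_square) (metis mult.assoc mult.left_commute mult_1_right)
      moreover have "(- (X * Y) - F) * U^4 = - ((X * U^2) * (Y * U^2)) - F * U^4"
        by (simp add: algebra_simps power2_eq_square power4_eq_xxxx)
      ultimately show ?thesis unfolding G_def by simp
    qed
    have "(4::int) dvd 2 * (int p + 1)" using k by presburger
    then have "(2::int)^2 dvd 2 * (int p + 1)" by simp
    then have "vgi (int 2) (of_int (2 * (int p + 1)))" by (rule vgi_pow2)
    then have v2p: "vgi 2 (2 * (of_nat p + 1))" by simp
    have "vgi (2 + 2) (U^2 * (U^2 - 2 * (of_nat p + 1)))"
      by (rule vgi_mult[OF u2 vgi_diff[OF u2 v2p]])
    moreover have "U^2 * (U^2 - 2 * (of_nat p + 1)) = G - of_nat (p * q)"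
      unfolding G_def using pq by (simp add: algebra_simps power2_eq_square)
    ultimately have g1: "vgi 3 (G - of_nat (p * q))" by (auto elim: vgi_mono)
    have "vgi (10 + (2 + 2)) (F * (U^2 * U^2))" by (rule vgi_mult[OF Fv vgi_mult[OF u2 u2]])
    then have "vgi 3 (F * (U^2 * U^2))" by (rule vgi_mono) simp
    moreover have "U^2 * U^2 = U^4" by (simp add: power2_eq_square power4_eq_xxxx)
    ultimately have g2: "vgi 3 (F * U^4)" by metis
    have "int (p * q) + 5 = 8 * (8 * k^2 + 12 * k + 5)"
      using k pq by (simp add: algebra_simps power2_eq_square)
    then have "(2::int)^3 dvd int (p * q) + 5" by simp
    then have "vgi (int 3) (of_int (int (p * q) + 5))" by (rule vgi_pow2)
    then have g3: "vgi 3 (of_nat (p * q) + 5)" by simp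
    have "vgi 3 (- (G - of_nat (p * q)) - F * U^4 - (of_nat (p * q) + 5))"
      by (intro vgi_diff vgi_uminus g1 g2 g3)
    moreover have "- (G - of_nat (p * q)) - F * U^4 - (of_nat (p * q) + 5) = V^2 - 5"
      using eqV by (simp add: algebra_simps)
    ultimately have v5: "vgi 3 (V^2 - 5)" by metis
    have VK: "V \<in> KK" using V_def WZ UK by simp
    have k5: "kord P 5 = 0" using kord_odd[of 5] by simp
    have "5 + (V^2 - 5) \<noteq> 0 \<and> kord P (5 + (V^2 - 5)) = kord P 5"
      apply (rule kord_strict)
      using k5 v5 vgi_iff[of "V^2 - 5" 3] VK by auto
    then have "V^2 \<noteq> 0" "kord P (V^2) = 0" using k5 by auto
    then have Vu: "V \<noteq> 0" "kord P V = 0" using kord_power[of V 2] VK by auto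
    have v1': "vgi 3 (V^2 - 1)" using unitsq VK Vu by blast
    have "vgi 3 ((V^2 - 1) - (V^2 - 5))" using vgi_diff[OF v1' v5] .
    then have "vgi 3 4" by simp
    then show False using vgi_iff[of 4 3] kord_4 by simp
  qed
qed

end

lemma pi2_root_int: "N \<ge> 1 \<Longrightarrow> \<exists>r::int. even r \<and> (2::int)^N dvd r^2 + r + 2"
proof (induction N rule: dec_induct)
  case base
  show ?case by (rule exI[of _ 0]) simp
next
  case (step N)
  then obtain r where r: "even r" "(2::int)^N dvd r^2 + r + 2" by blast
  then obtain k where k: "r^2 + r + 2 = 2^N * k" by blast
  show ?case
  proof (cases "even k")
    case True
    then obtain j where "k = 2 * j" by blast
    then have "r^2 + r + 2 = 2^Suc N * j" using k by simp
    then show ?thesis using r by (intro exI[of _ r]) simp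
  next
    case False
    have ev: "even (k + 2 * r + 1 + 2^N)" using False step(1) by simp
    then obtain j where j: "k + 2 * r + 1 + 2^N = 2 * j" by blast
    have "(r + 2^N)^2 + (r + 2^N) + 2 = (r^2 + r + 2) + 2^N * (2 * r + 1 + 2^N)"
      by (simp add: algebra_simps power2_eq_square)
    also have "\<dots> = 2^N * (k + 2 * r + 1 + 2^N)" using k by (simp add: algebra_simps)
    also have "\<dots> = 2^Suc N * j" using j by simp
    finally show ?thesis using r step(1) by (intro exI[of _ "r + 2^N"]) simp
  qed
qed

lemma pi2_sq: "pi2 * pi2 + pi2 + 2 = 0"
  unfolding pi2_om using om_sq by (simp add: algebra_simps)

lemma pi2_rep_pi: "\<exists>r::int. kp.vgi pi2 (int N) (pi2 - of_int r)"
proof -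
  obtain r where r: "even r" "(2::int)^(N+1) dvd r^2 + r + 2" using pi2_root_int[of "N+1"] by auto
  have odd1: "odd (r + 1)" using r by simp
  then have "r + 1 \<noteq> 0" by presburger
  then have nz1: "(of_int (r + 1) :: complex) \<noteq> 0" by (metis of_int_eq_0_iff)
  have "of_int (r + 1) + pi2 \<noteq> 0 \<and> kord pi2 (of_int (r + 1) + pi2) = kord pi2 (of_int (r + 1))"
    apply (rule pi2.kord_strict)
    using pi2.kord_odd[OF odd1] nz1 by auto
  then have u: "of_int (r + 1) + pi2 \<noteq> 0" "kord pi2 (of_int (r + 1) + pi2) = 0"
    using pi2.kord_odd[OF odd1] by auto
  have "kp.vgi pi2 (int (N+1)) (of_int (r^2 + r + 2))" using r(2) by (rule pi2.vgi_pow2)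
  then have v0: "kp.vgi pi2 (int (N+1)) (- of_int (r^2 + r + 2))" by (rule pi2.vgi_uminus)
  have "kp.vgi pi2 (int (N+1) - kord pi2 (of_int (r + 1) + pi2)) (- of_int (r^2 + r + 2) / (of_int (r + 1) + pi2))"
    by (rule pi2.vgi_divide[OF _ _ u(1) v0]) simp_all
  moreover have "- of_int (r^2 + r + 2) / (of_int (r + 1) + pi2) = pi2 - of_int r"
  proof -
    have "(pi2 - of_int r) * (of_int (r + 1) + pi2) = (pi2 * pi2 + pi2 + 2) - of_int (r^2 + r + 2)"
      by (simp add: algebra_simps power2_eq_square)
    then show ?thesis using pi2_sq u(1) by (simp add: field_simps)
  qed
  ultimately have "kp.vgi pi2 (int (N+1)) (pi2 - of_int r)" using u by simp
  then show ?thesis by (intro exI[of _ r]) (erule pi2.vgi_mono, simp)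
qed

lemma pi2_rep: "x \<in> OK \<Longrightarrow> \<exists>m::int. kp.vgi pi2 (int N) (x - of_int m)"
proof -
  assume "x \<in> OK"
  then obtain a b :: int where x: "x = of_int a + of_int b * om" unfolding OK_iff by blast
  obtain r where r: "kp.vgi pi2 (int N) (pi2 - of_int r)" using pi2_rep_pi by blast
  have v: "kp.vgi pi2 (0 + int N) (of_int (- b) * (pi2 - of_int r))"
    by (rule pi2.vgi_mult[OF pi2.vgi_OK r]) simp
  have eq: "of_int (- b) * (pi2 - of_int r) = x - of_int (a - b * r)"
    unfolding x pi2_om by (simp add: algebra_simps)
  have "kp.vgi pi2 (0 + int N) (x - of_int (a - b * r))" using v unfolding eq .
  then show ?thesis by (intro exI[of _ "a - b * r"]) simp
qed

interpretation pi2: tw2 pi2 pi2bar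
  by unfold_locales (rule pi2_rep)

lemma sqrtm7_nz: "sqrtm7 \<noteq> 0" using sqrtm7_mult_self by auto

lemma d7: "(p::nat) dvd 7 \<Longrightarrow> p > 2 \<Longrightarrow> p = 7"
proof -
  assume a: "p dvd 7" "p > 2"
  then have "p \<le> 7" by (simp add: dvd_imp_le)
  then have "p \<in> {3,4,5,6,7}" using a(2) by auto
  then show ?thesis using a(1) by auto
qed

lemma nd2: "(2::nat) < p \<Longrightarrow> \<not> int p dvd 2" by (auto dest: zdvd_imp_le)

lemma OK_dvd_nat_int: "OK_dvd (of_nat p) (of_int m) \<Longrightarrow> int p dvd m"
proof -
  assume "OK_dvd (of_nat p) (of_int m)"
  then obtain c where c: "c \<in> OK" "of_int m = of_nat p * c" unfolding OK_dvd_def by blast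
  then obtain a b :: int where ab: "c = of_int a + of_int b * om" unfolding OK_iff by blast
  have "Im (of_int m :: complex) = Im (of_nat p * c)" using c by simp
  then have "real p * (real_of_int b * sqrt 7 / 2) = 0" unfolding ab by simp
  then have "p = 0 \<or> b = 0" by simp
  then show ?thesis
  proof
    assume "p = 0" then show ?thesis using c by simp
  next
    assume "b = 0"
    then have "(of_int m :: complex) = of_int (int p * a)" using c ab by simp
    then have "m = int p * a" by (simp only: of_int_eq_iff)
    then show ?thesis by simp
  qed
qed

lemma OK_dvd_nat_sqrt: "OK_dvd (of_nat p) (of_int t + of_int e * sqrtm7) \<Longrightarrow> int p dvd 2 * e"
proof -
  assume "OK_dvd (of_nat p) (of_int t + of_int e * sqrtm7)"
  then obtain c where c: "c \<in> OK" "of_int t + of_int e * sqrtm7 = of_nat p * c" unfolding OK_dvd_def by blast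
  then obtain a b :: int where ab: "c = of_int a + of_int b * om" unfolding OK_iff by blast
  have "Im (of_int t + of_int e * sqrtm7) = Im (of_nat p * c)" using c by simp
  then have "real_of_int e * sqrt 7 = real p * (real_of_int b * sqrt 7 / 2)" unfolding ab by simp
  then have "real_of_int (2 * e) = real_of_int (int p * b)" by (simp add: field_simps)
  then have "2 * e = int p * b" by (simp only: of_int_eq_iff)
  then show ?thesis by simp
qed

lemma inert_facts:
  assumes pr: "prime p" "p > 2" and inert: "OK_prime (of_nat p)"
  shows "p \<noteq> 7" "\<not> QuadRes (int p) (-7)"
proof -
  interpret kp "of_nat p" using inert by unfold_locales
  show "p \<noteq> 7"
  proof
    assume "p = 7"
    then have "of_nat p = (of_int 0 + of_int 1 * sqrtm7) * (of_int 0 + of_int (-1) * sqrtm7)"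
      using sqrtm7_mult_self by simp
    then have "dv ((of_int 0 + of_int 1 * sqrtm7) * (of_int 0 + of_int (-1) * sqrtm7))"
      using dv_PI[of 1] by simp
    then have "dv (of_int 0 + of_int 1 * sqrtm7) \<or> dv (of_int 0 + of_int (-1) * sqrtm7)"
      by (intro P_prime) auto
    then have "int p dvd 2 * 1 \<or> int p dvd 2 * (-1)" using OK_dvd_nat_sqrt by blast
    then show False using nd2[OF pr(2)] by auto
  qed
  show "\<not> QuadRes (int p) (-7)"
  proof
    assume "QuadRes (int p) (-7)"
    then obtain y where "[y^2 = -7] (mod int p)" unfolding QuadRes_def by blast
    then have "int p dvd y^2 + 7" by (simp add: cong_iff_dvd_diff)
    then obtain j where j: "y^2 + 7 = int p * j" by blast
    have "(of_int y + of_int 1 * sqrtm7) * (of_int y + of_int (-1) * sqrtm7) = of_int (y^2 + 7)"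
      by (simp add: algebra_simps power2_eq_square sqrtm7_mult_self)
    also have "\<dots> = of_nat p * of_int j" using j by simp
    finally have "dv ((of_int y + of_int 1 * sqrtm7) * (of_int y + of_int (-1) * sqrtm7))"
      using dv_PI[of "of_int j"] by simp
    then have "dv (of_int y + of_int 1 * sqrtm7) \<or> dv (of_int y + of_int (-1) * sqrtm7)"
      by (intro P_prime) auto
    then have "int p dvd 2 * 1 \<or> int p dvd 2 * (-1)" using OK_dvd_nat_sqrt by blast
    then show False using nd2[OF pr(2)] by auto
  qed
qed

lemma pm1_cong: "a \<in> {1, -1} \<Longrightarrow> b \<in> {1, -1} \<Longrightarrow> [a = b] (mod int p) \<Longrightarrow> p > 2 \<Longrightarrow> (a::int) = b"
proof (rule ccontr)
  assume h: "a \<in> {1, -1}" "b \<in> {1, -1}" "[a = b] (mod int p)" "p > 2" "a \<noteq> b"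
  then have "int p dvd a - b" by (simp add: cong_iff_dvd_diff)
  moreover have "a - b = 2 \<or> a - b = -2" using h by auto
  ultimately have "int p dvd 2" by auto
  then show False using h(4) by (auto dest: zdvd_imp_le)
qed

lemma Legendre_pm1: "prime p \<Longrightarrow> \<not> int p dvd a \<Longrightarrow> Legendre a (int p) \<in> {1, -1}"
  unfolding Legendre_def by (auto simp: cong_0_iff)

lemma nt_facts:
  assumes pr: "prime p" "p > 2" "p \<noteq> 7" and nq: "\<not> QuadRes (int p) (-7)"
  shows "QuadRes (int p) (-1) \<or> QuadRes (int p) 7" "p mod 7 \<in> {3, 5, 6}"
proof -
  define k where "k = (p - 1) div 2"
  have n7: "\<not> int p dvd 7"
  proof
    assume "int p dvd 7"
    then have "p dvd 7" by presburger
    then show False using d7 pr by auto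
  qed
  have n1: "\<not> int p dvd 1" "\<not> int p dvd (-1)" using pr by auto
  have nm7: "\<not> int p dvd (-7)" using n7 by simp
  have Lm7: "Legendre (-7) (int p) = -1"
    using nq nm7 unfolding Legendre_def by (simp add: cong_0_iff)
  have e1: "[Legendre (-1) (int p) = (-1)^k] (mod int p)" using euler_criterion[OF pr(1,2)] k_def by simp
  have e7: "[Legendre 7 (int p) = 7^k] (mod int p)" using euler_criterion[OF pr(1,2)] k_def by simp
  have em7: "[Legendre (-7) (int p) = (-7)^k] (mod int p)" using euler_criterion[OF pr(1,2)] k_def by simp
  have "(-7::int)^k = (-1)^k * 7^k" by (simp flip: power_mult_distrib)
  then have "[Legendre (-7) (int p) = Legendre (-1) (int p) * Legendre 7 (int p)] (mod int p)"
    using em7 cong_mult[OF e1 e7] by (metis cong_sym cong_trans)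
  moreover have L1: "Legendre (-1) (int p) \<in> {1, -1}" using Legendre_pm1[OF pr(1)] n1 by blast
  moreover have L7: "Legendre 7 (int p) \<in> {1, -1}" using Legendre_pm1[OF pr(1)] n7 by blast
  ultimately have prod: "Legendre (-1) (int p) * Legendre 7 (int p) = -1"
    using pm1_cong[of "Legendre (-7) (int p)" "Legendre (-1) (int p) * Legendre 7 (int p)" p] Lm7 pr(2)
    by auto
  then have "Legendre (-1) (int p) = 1 \<or> Legendre 7 (int p) = 1" using L1 L7 by auto
  then show "QuadRes (int p) (-1) \<or> QuadRes (int p) 7"
    unfolding Legendre_def by (auto split: if_splits)
  have "(-1::int)^k \<in> {1, -1}" by (cases "even k") auto
  then have L1k: "Legendre (-1) (int p) = (-1)^k" using pm1_cong[OF L1 _ e1 pr(2)] by blast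
  have qr: "Legendre (int p) 7 * Legendre 7 (int p) = (-1::int) ^ ((p - 1) div 2 * ((7 - 1) div 2))"
    using Quadratic_Reciprocity[of p 7] pr by simp
  have "(-1::int) ^ ((p - 1) div 2 * ((7 - 1) div 2)) = ((-1)^k)^3" unfolding k_def
    by (simp add: power_mult)
  also have "\<dots> = (-1)^k" by (cases "even k") auto
  finally have "Legendre (int p) 7 * Legendre 7 (int p) = Legendre (-1) (int p)" using qr L1k by simp
  then have "Legendre (int p) 7 * Legendre 7 (int p) * Legendre 7 (int p) = Legendre (-1) (int p) * Legendre 7 (int p)"
    by simp
  then have Lp7: "Legendre (int p) 7 = -1" using L7 prod by auto
  show "p mod 7 \<in> {3, 5, 6}"
  proof (rule ccontr)
    assume "p mod 7 \<notin> {3, 5, 6}"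
    then have "p mod 7 \<in> {0, 1, 2, 4}" by auto
    then have "[int p = 0] (mod 7) \<or> QuadRes 7 (int p)"
    proof (elim insertE)
      assume "p mod 7 = 0" then have "(7::int) dvd int p" by presburger
      then show ?thesis by (simp add: cong_0_iff)
    next
      assume "p mod 7 = 1"
      then have "[1^2 = int p] (mod 7)" by (simp add: cong_def) presburger
      then show ?thesis unfolding QuadRes_def by blast
    next
      assume "p mod 7 = 2"
      then have "[3^2 = int p] (mod 7)" by (simp add: cong_def) presburger
      then show ?thesis unfolding QuadRes_def by blast
    next
      assume "p mod 7 = 4"
      then have "[2^2 = int p] (mod 7)" by (simp add: cong_def) presburger
      then show ?thesis unfolding QuadRes_def by blast
    qed simp
    then show False using Lp7 unfolding Legendre_def by (auto split: if_splits)
  qed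
qed

lemma exist_padic:
  assumes pr: "prime p" "p > 2" "p \<noteq> 7" and inert: "OK_prime (of_nat p)"
    and qr: "QuadRes (int p) (-1) \<or> QuadRes (int p) 7"
  shows "loc_solv (of_nat p) p' q' (-1)"
proof -
  interpret kp "of_nat p" using inert by unfold_locales
  have ndint: "\<not> dv (of_int m)" if "\<not> int p dvd m" for m
    using that OK_dvd_nat_int by blast
  have k2: "kord (of_nat p) 2 = 0"
    using kord_unit[of 2] ndint[of 2] nd2[OF pr(2)] by simp
  have vint: "vgi 1 (of_int m)" if dm: "int p dvd m" for m
  proof -
    obtain j where "m = int p * j" using dm by blast
    then have "of_int m = (of_nat p) powi 1 * of_int j" by simp
    then show ?thesis unfolding vgi_def by (intro bexI[of _ "of_int j"] bexI[of _ 1]) auto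
  qed
  have kint: "kord (of_nat p) (of_int m) = 0" if "\<not> int p dvd m" for m
    using kord_unit ndint that by simp
  obtain x0 where x0: "x0 \<in> KK" "x0 \<noteq> 0" "kord (of_nat p) x0 = 0" "vgi 1 (x0^2 - (-1))"
  proof (cases "QuadRes (int p) (-1)")
    case True
    then obtain y where "[y^2 = -1] (mod int p)" unfolding QuadRes_def by blast
    then have d: "int p dvd y^2 + 1" by (simp add: cong_iff_dvd_diff)
    have ny: "\<not> int p dvd y"
    proof
      assume "int p dvd y"
      then have "int p dvd y^2" by (simp add: power2_eq_square)
      then have "int p dvd 1" using d by (simp add: dvd_add_right_iff)
      then show False using pr by auto
    qed
    have "of_int y \<noteq> (0::complex)" using ny by auto
    moreover have "vgi 1 ((of_int y)^2 - (-1))" using vint[OF d] by simp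
    ultimately show ?thesis using that[of "of_int y"] kint[OF ny] by simp
  next
    case False
    then have "QuadRes (int p) 7" using qr by simp
    then obtain t where "[t^2 = 7] (mod int p)" unfolding QuadRes_def by blast
    then have d: "int p dvd t^2 - 7" by (simp add: cong_iff_dvd_diff)
    have nt: "\<not> int p dvd t"
    proof
      assume "int p dvd t"
      then have "int p dvd t^2" by (simp add: power2_eq_square)
      then have "int p dvd t^2 - (t^2 - 7)" using d by (rule dvd_diff)
      then have "int p dvd 7" by simp
      then have "p dvd 7" by presburger
      then show False using d7 pr by auto
    qed
    have n7: "\<not> int p dvd 7"
    proof
      assume "int p dvd 7"
      then have "p dvd 7" by presburger
      then show False using d7 pr by auto
    qed
    define x where "x = of_int t * sqrtm7 / 7"
    have xK: "x \<in> KK" unfolding x_def by simp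
    have t0: "(of_int t :: complex) \<noteq> 0" using nt by auto
    have x0: "x \<noteq> 0" unfolding x_def using t0 sqrtm7_nz by simp
    have ks: "kord (of_nat p) sqrtm7 = 0"
    proof -
      have "kord (of_nat p) (sqrtm7 * sqrtm7) = kord (of_nat p) (of_int (-7))"
        using sqrtm7_mult_self by simp
      also have "\<dots> = 0" using kint[of "-7"] n7 by simp
      finally show ?thesis using kord_mult[of sqrtm7 sqrtm7] sqrtm7_nz by simp
    qed
    have kx: "kord (of_nat p) x = 0"
      unfolding x_def using kord_divide[of "of_int t * sqrtm7" 7] kord_mult[of "of_int t" sqrtm7] ks
        kint[OF nt] kint[of 7] n7 t0 sqrtm7_nz by simp
    have eq: "x^2 - (-1) = - of_int (t^2 - 7) / 7"
      unfolding x_def by (simp add: power_mult_distrib sqrtm7_sq field_simps)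
    have v: "vgi 1 (- of_int (t^2 - 7) / 7)"
      using vgi_divide[of "- of_int (t^2 - 7)" 7 1] vgi_uminus[OF vint[OF d]] kint[of 7] n7 by simp
    have "vgi 1 (x^2 - (-1))" unfolding eq by (rule v)
    then show ?thesis using that[of x] xK x0 kx by blast
  qed
  obtain w where w: "\<forall>n. w n \<in> KK \<and> w n \<noteq> 0 \<and> kord (of_nat p) (w n) = 0" "adic_cauchy (of_nat p) w"
    "adic_null (of_nat p) (\<lambda>n. w n ^ 2 - (-1))"
    using newton[of "-1" x0 1] x0 k2 by auto
  have "adic_null (of_nat p) (\<lambda>n. (-1) * (w n ^ 2 - (-1)))"
    by (rule null_cmult[OF w(3)]) (use w(1) in auto)
  then have "adic_null (of_nat p) (\<lambda>n. Cd p' q' (-1) (w n) 0)"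
    by (rule null_cong) (simp add: Cd_def)
  then show ?thesis unfolding loc_solv_def
    by (intro exI[of _ w] exI[of _ "\<lambda>n. 0"]) (use w cauchy_const in simp)
qed

lemma loc_solv_global:
  assumes "OK_prime P" "w0 \<in> KK" "z0 \<in> KK" "Cd p q d w0 z0 = 0"
  shows "loc_solv P p q d"
proof -
  interpret kp P using assms(1) by unfold_locales
  show ?thesis unfolding loc_solv_def
    by (intro exI[of _ "\<lambda>n. w0"] exI[of _ "\<lambda>n. z0"]) (use assms cauchy_const null_zero in simp)
qed

lemma odd_prime_gt2: "prime (p::nat) \<Longrightarrow> odd p \<Longrightarrow> p > 2"
  using prime_ge_2_nat[of p] by (cases "p = 2") auto

lemma l1: "(p::nat) mod 8 \<noteq> 5 \<Longrightarrow> p mod 7 = 3 \<Longrightarrow> odd p \<Longrightarrow> p mod 56 = 3 \<or> p mod 56 = 17 \<or> p mod 56 = 31"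
proof -
  assume a: "p mod 8 \<noteq> 5" "p mod 7 = 3" "odd p"
  define r where "r = p mod 56"
  have r2: "r mod 2 = p mod 2" unfolding r_def by (simp add: mod_mod_cancel)
  have r: "r < 56" "r mod 8 = p mod 8" "r mod 7 = p mod 7" "odd r"
    unfolding r_def using a(3) r2[unfolded r_def] by (simp_all add: mod_mod_cancel odd_iff_mod_2_eq_one)
  define j where "j = r div 7"
  have rj: "r = 7 * j + 3" using r a unfolding j_def by (metis div_mult_mod_eq mult.commute)
  have "j < 8" using r unfolding j_def by simp
  then have "j = 0 \<or> j = 1 \<or> j = 2 \<or> j = 3 \<or> j = 4 \<or> j = 5 \<or> j = 6 \<or> j = 7" by presburger
  then have "r \<in> {3, 10, 17, 24, 31, 38, 45, 52}" using rj by auto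
  then show ?thesis using r a unfolding r_def by auto
qed

lemma l2: "(p::nat) mod 56 = 3 \<or> p mod 56 = 17 \<or> p mod 56 = 31 \<Longrightarrow> p mod 8 = 1 \<or> p mod 8 = 3 \<or> p mod 8 = 7"
  by (auto simp: mod_mod_cancel[of 8 56 p, symmetric])

lemma Selmer_I: assumes "d \<in> KS2 p q" "arch_solv p q d" "loc_solv pi2 p q d" "loc_solv pi2bar p q d"
  "loc_solv (of_nat p) p q d" "loc_solv (of_nat q) p q d" shows "d \<in> Selmer p q"
  unfolding Selmer_def using assms by blast

lemma X: assumes "prime p" "prime q" "odd p" "q = p + 2" "p mod 8 \<in> {1,3,7}" "p > 2" "q > 2" "p \<noteq> 7" "q \<noteq> 7"
 "OK_prime (of_nat p)" "OK_prime (of_nat q)" "QuadRes (int p) (-1) \<or> QuadRes (int p) 7"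
 "QuadRes (int q) (-1) \<or> QuadRes (int q) 7" "-1 \<in> KS2 p q" "arch_solv p q (-1)"
 shows "-1 \<in> Selmer p q"
proof -
    have "loc_solv pi2 p q (-1)" using pi2.exist_2adic[OF assms(3,4,5)] .
    moreover have "loc_solv pi2bar p q (-1)" using pi2bar.exist_2adic[OF assms(3,4,5)] .
    moreover have "loc_solv (of_nat p) p q (-1)" using exist_padic[OF assms(1,6,8,10,12)] .
    moreover have "loc_solv (of_nat q) p q (-1)" using exist_padic[OF assms(2,7,9,11,13)] .
    ultimately show "-1 \<in> Selmer p q" using assms(14,15) Selmer_I by blast
qed

lemma pm7_lem: "(p::nat) mod 7 = 3 \<or> p mod 7 = 5 \<or> p mod 7 = 6 \<Longrightarrow> q mod 7 = 3 \<or> q mod 7 = 5 \<or> q mod 7 = 6 \<Longrightarrow> q = p + 2 \<Longrightarrow> p mod 7 = 3"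
proof -
  assume a: "p mod 7 = 3 \<or> p mod 7 = 5 \<or> p mod 7 = 6" "q mod 7 = 3 \<or> q mod 7 = 5 \<or> q mod 7 = 6" "q = p + 2"
  have "q mod 7 = (p mod 7 + 2) mod 7" unfolding a(3) by (rule mod_add_left_eq[symmetric])
  then show ?thesis using a(1,2) by auto
qed

theorem proposition2p2:
  fixes p q :: nat
  assumes "prime p" and "prime q" and "odd p" and "odd q" and "q = p + 2"
    and "inert_in_K p" and "inert_in_K q"
  shows "(\<forall>d\<in>KS2 p q. (odd (kord pi2 d) \<or> odd (kord pi2bar d)) \<longrightarrow> d \<notin> Selmer p q)
       \<and> - of_nat p \<in> Selmer p q \<and> - of_nat q \<in> Selmer p q
       \<and> (-1 \<in> Selmer p q \<longleftrightarrow> p mod 56 \<in> {3, 17, 31})"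
proof -
  have p2: "p > 2" using odd_prime_gt2[OF assms(1,3)] .
  have q2: "q > 2" using odd_prime_gt2[OF assms(2,4)] .
  have ip: "OK_prime (of_nat p)" and iq: "OK_prime (of_nat q)"
    using assms(6,7) unfolding inert_in_K_def by auto
  have p7: "p \<noteq> 7" "\<not> QuadRes (int p) (-7)" using inert_facts[OF assms(1) p2 ip] by auto
  have q7: "q \<noteq> 7" "\<not> QuadRes (int q) (-7)" using inert_facts[OF assms(2) q2 iq] by auto
  have ntp: "QuadRes (int p) (-1) \<or> QuadRes (int p) 7" "p mod 7 \<in> {3, 5, 6}"
    using nt_facts[OF assms(1) p2 p7] by auto
  have ntq: "QuadRes (int q) (-1) \<or> QuadRes (int q) 7" "q mod 7 \<in> {3, 5, 6}"
    using nt_facts[OF assms(2) q2 q7] by auto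
  have a1: "p mod 7 = 3 \<or> p mod 7 = 5 \<or> p mod 7 = 6" using ntp(2) by simp
  have a2: "q mod 7 = 3 \<or> q mod 7 = 5 \<or> q mod 7 = 6" using ntq(2) by simp
  have pm7: "p mod 7 = 3" using pm7_lem[OF a1 a2 assms(5)] .
  have primes: "OK_prime pi2" "OK_prime pi2bar" "OK_prime (of_nat p)" "OK_prime (of_nat q)"
    using pi2_prime pi2bar_prime ip iq by auto
  have part1: "\<forall>d\<in>KS2 p q. (odd (kord pi2 d) \<or> odd (kord pi2bar d)) \<longrightarrow> d \<notin> Selmer p q"
  proof (intro ballI impI)
    fix d assume d: "d \<in> KS2 p q" and od: "odd (kord pi2 d) \<or> odd (kord pi2bar d)"
    then obtain a b c e f where de: "d = (-1) ^ a * pi2 ^ b * pi2bar ^ c * of_nat p ^ e * of_nat q ^ f"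
      unfolding KS2_def by blast
    have dK: "d \<in> KK" unfolding de using OK_KK[OF OK_pi2] OK_KK[OF OK_pi2bar] by simp
    have "pi2 \<noteq> 0" "pi2bar \<noteq> 0" using pi2_pi2bar by auto
    moreover have "(of_nat p :: complex) \<noteq> 0" "(of_nat q :: complex) \<noteq> 0" using p2 q2 by auto
    ultimately have d0: "d \<noteq> 0" unfolding de by simp
    from od show "d \<notin> Selmer p q"
    proof
      assume "odd (kord pi2 d)"
      then have "\<not> loc_solv pi2 p q d" using pi2.no_point_odd[OF dK d0] assms(3,4) by blast
      then show ?thesis unfolding Selmer_def by blast
    next
      assume "odd (kord pi2bar d)"
      then have "\<not> loc_solv pi2bar p q d" using pi2bar.no_point_odd[OF dK d0] assms(3,4) by blast
      then show ?thesis unfolding Selmer_def by blast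
    qed
  qed
  have Cp: "Cd p q (- of_nat p) 0 1 = 0" unfolding Cd_def by (simp add: algebra_simps power2_eq_square)
  have Cq: "Cd p q (- of_nat q) 0 1 = 0" unfolding Cd_def by (simp add: algebra_simps power2_eq_square)
  have part2p: "- of_nat p \<in> Selmer p q"
  proof -
    have "- of_nat p \<in> KS2 p q" unfolding KS2_def
      by (intro CollectI exI[of _ "1::nat"] exI[of _ "0::nat"] exI[of _ "0::nat"] exI[of _ "1::nat"] exI[of _ "0::nat"]) simp
    moreover have "arch_solv p q (- of_nat p)" unfolding arch_solv_def using Cp by blast
    moreover have "loc_solv P p q (- of_nat p)" if "OK_prime P" for P
      by (rule loc_solv_global[OF that _ _ Cp]) simp_all
    ultimately show ?thesis unfolding Selmer_def using primes by blast
  qed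
  have part2q: "- of_nat q \<in> Selmer p q"
  proof -
    have "- of_nat q \<in> KS2 p q" unfolding KS2_def
      by (intro CollectI exI[of _ "1::nat"] exI[of _ "0::nat"] exI[of _ "0::nat"] exI[of _ "0::nat"] exI[of _ "1::nat"]) simp
    moreover have "arch_solv p q (- of_nat q)" unfolding arch_solv_def using Cq by blast
    moreover have "loc_solv P p q (- of_nat q)" if "OK_prime P" for P
      by (rule loc_solv_global[OF that _ _ Cq]) simp_all
    ultimately show ?thesis unfolding Selmer_def using primes by blast
  qed
  have part3: "-1 \<in> Selmer p q \<longleftrightarrow> p mod 56 \<in> {3, 17, 31}"
  proof
    assume "-1 \<in> Selmer p q"
    then have "loc_solv pi2 p q (-1)" unfolding Selmer_def by blast
    then have "p mod 8 \<noteq> 5" using pi2.no_point_5 assms(5) by blast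
    then have "p mod 56 = 3 \<or> p mod 56 = 17 \<or> p mod 56 = 31" using pm7 assms(3) l1 by blast
    then show "p mod 56 \<in> {3, 17, 31}" by simp
  next
    assume m: "p mod 56 \<in> {3, 17, 31}"
    then have "p mod 56 = 3 \<or> p mod 56 = 17 \<or> p mod 56 = 31" by simp
    then have "p mod 8 = 1 \<or> p mod 8 = 3 \<or> p mod 8 = 7" by (rule l2)
    then have m8: "p mod 8 \<in> {1, 3, 7}" by simp
    have "-1 \<in> KS2 p q" unfolding KS2_def
      by (intro CollectI exI[of _ "1::nat"] exI[of _ "0::nat"] exI[of _ "0::nat"] exI[of _ "0::nat"] exI[of _ "0::nat"]) simp
    moreover have "arch_solv p q (-1)" unfolding arch_solv_def
      by (intro exI[of _ \<i>] exI[of _ 0]) (simp add: Cd_def)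
    ultimately show "-1 \<in> Selmer p q"
      using X[OF assms(1,2,3,5) m8 p2 q2 p7(1) q7(1) ip iq ntp(1) ntq(1)] by blast
  qed
  show ?thesis using part1 part2p part2q part3 by blast
qed

end
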